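(* Let $f:\Sigma\to\mathbb{S}^4_1$ be a non-isotropic conformal marginally trapped immersion, $\{N_1,N_2\}$ a positively oriented orthonormal normal frame, and $z$ a local complex coordinate. Then the canonical lift of the null Gauss map $G$ with respect to $z$ is $$Y=\frac{e^{u}}{\sqrt2\,|\xi_1-\xi_2|}(N_1+N_2),$$ which is independent of the choice of positively oriented frame. Moreover $V^\perp=\mathbb{R}f$ and the normal Hopf differential of $G$ is $$\kappa=\frac{(\xi_1-\xi_2)e^{u}}{\sqrt2\,|\xi_1-\xi_2|}\,f ,$$ so that, writing $\xi_1-\xi_2=|\xi_1-\xi_2|e^{i\theta}$ and $\kappa=kf$, one has $k=\frac{e^{u+i\theta}}{\sqrt2}$ and $e^{2u}=2|k|^2$. Furthermore $f_z=\sqrt2\,e^{u+i\theta}\big((u+i\theta)_{\bar z}Y-Y_{\bar z}\big)$.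
   Context: $\mathbb{R}^5_1$ is $\mathbb{R}^5$ with $\langle x,y\rangle=x_0y_0+x_1y_1+x_2y_2+x_3y_3-x_4y_4$ (complex-bilinearly extended), $\mathbb{S}^4_1=\{\langle x,x\rangle=1\}$, future pointing means $\langle X,e_4\rangle<0$; $\mathcal L$ is the light cone, $\mathbb{S}^3\cong P(\mathcal L)$. $f$ conformal spacelike immersion, $\langle f_z,f_{\bar z}\rangle=e^{2u}$. Positively oriented orthonormal normal frame: $\langle N_1,N_1\rangle=1,\langle N_2,N_2\rangle=-1,\langle N_1,N_2\rangle=0$, $N_2$ future pointing, orientation of $\nu(f)$. $\xi_1=\langle f_{zz},N_1\rangle$, $\xi_2=-\langle f_{zz},N_2\rangle$. $\mathbf H$ defined by $f_{z\bar z}=-e^{2u}f+e^{2u}\mathbf H$; marginally trapped: $\langle\mathbf H,\mathbf H\rangle=0$, orientation with $\mathbf H=h(N_1+N_2)$. Non-isotropic: $\xi_1^2-\xi_2^2$ never zero. Null Gauss map $G=[N_1+N_2]$. For a conformal immersion $\psi:\Sigma\to P(\mathcal L)$ and coordinate $z$: the canonical lift is the lift $Y$ into the future light cone with $\langle Y_z,Y_{\bar z}\rangle=\tfrac12$; $V=\mathrm{span}\{Y,Y_z,Y_{\bar z},Y_{z\bar z}\}$; $N\in\Gamma(V)$ is the unique section with $\langle N,N\rangle=\langle N,Y_z\rangle=0$, $\langle Y,N\rangle=-1$; the Schwarzian $s=2\langle Y_{zz},N\rangle$ and the normal Hopf differential $\kappa\in\Gamma(V^\perp\otimes\mathbb C)$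 are defined by $Y_{zz}+\frac s2Y=\kappa$. *)

theory Defs
  imports "HOL-Analysis.Analysis"
begin

text \<open>Local setting: the surface is studied in a complex coordinate chart, i.e.
  on an open set U of the complex plane with coordinate z.  Vectors of the
  (complexified) Minkowski space R^5_1 are elements of complex^5; real vectors are
  those with vanishing imaginary parts.\<close>

definition lip :: "complex^5 \<Rightarrow> complex^5 \<Rightarrow> complex" where
  "lip x y = x$0*y$0 + x$1*y$1 + x$2*y$2 + x$3*y$3 - x$4*y$4"

definition e4 :: "complex^5" where
  "e4 = axis 4 1"

definition realv :: "complex^5 \<Rightarrow> bool" where
  "realv v \<longleftrightarrow> (\<forall>i. Im (v$i) = 0)"

definition future :: "complex^5 \<Rightarrow> bool" where
  "future v \<longleftrightarrow> Re (lip v e4) < 0"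

definition dx :: "(complex \<Rightarrow> 'a::real_normed_vector) \<Rightarrow> complex \<Rightarrow> 'a" where
  "dx F z = vector_derivative (\<lambda>t. F (z + complex_of_real t)) (at 0)"

definition dy :: "(complex \<Rightarrow> 'a::real_normed_vector) \<Rightarrow> complex \<Rightarrow> 'a" where
  "dy F z = vector_derivative (\<lambda>t. F (z + \<i> * complex_of_real t)) (at 0)"

coinductive smooth_on :: "complex set \<Rightarrow> (complex \<Rightarrow> 'a::real_normed_vector) \<Rightarrow> bool" where
  "F differentiable_on U \<Longrightarrow> smooth_on U (dx F) \<Longrightarrow> smooth_on U (dy F) \<Longrightarrow> smooth_on U F"

definition Dz :: "(complex \<Rightarrow> complex^5) \<Rightarrow> complex \<Rightarrow> complex^5" where
  "Dz F z = (1/2) *s (dx F z - \<i> *s dy F z)"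

definition Dzb :: "(complex \<Rightarrow> complex^5) \<Rightarrow> complex \<Rightarrow> complex^5" where
  "Dzb F z = (1/2) *s (dx F z + \<i> *s dy F z)"

definition dzc :: "(complex \<Rightarrow> complex) \<Rightarrow> complex \<Rightarrow> complex" where
  "dzc F z = (dx F z - \<i> * dy F z) / 2"

definition dzbc :: "(complex \<Rightarrow> complex) \<Rightarrow> complex \<Rightarrow> complex" where
  "dzbc F z = (dx F z + \<i> * dy F z) / 2"

text \<open>Canonical lift: Y is the canonical lift with respect to z (on U) of the
  conformal immersion \<psi> into P(L) represented by the (nonvanishing) lift Phi,
  i.e. \<psi>(z) = [Phi(z)].  The conformality of \<psi> is part of the requirement.\<close>
definition canonical_lift :: "complex set \<Rightarrow> (complex \<Rightarrow> complex^5) \<Rightarrow> (complex \<Rightarrow> complex^5) \<Rightarrow> bool" where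
  "canonical_lift U Phi Y \<longleftrightarrow> smooth_on U Y \<and>
     (\<forall>z\<in>U. realv (Y z) \<and> (\<exists>c::real. Y z = complex_of_real c *s Phi z) \<and>
        lip (Y z) (Y z) = 0 \<and> future (Y z) \<and>
        lip (Dz Y z) (Dz Y z) = 0 \<and> lip (Dz Y z) (Dzb Y z) = 1/2)"

definition inV :: "(complex \<Rightarrow> complex^5) \<Rightarrow> complex \<Rightarrow> complex^5 \<Rightarrow> bool" where
  "inV Y z w \<longleftrightarrow> (\<exists>a b c d. w = a *s Y z + b *s Dz Y z + c *s Dzb Y z + d *s Dzb (Dz Y) z)"

definition Vperp :: "(complex \<Rightarrow> complex^5) \<Rightarrow> complex \<Rightarrow> (complex^5) set" where
  "Vperp Y z = {w. realv w \<and> lip w (Y z) = 0 \<and> lip w (Dz Y z) = 0 \<and>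
                  lip w (Dzb Y z) = 0 \<and> lip w (Dzb (Dz Y) z) = 0}"

definition conormal :: "(complex \<Rightarrow> complex^5) \<Rightarrow> complex \<Rightarrow> complex^5" where
  "conormal Y z = (THE N. realv N \<and> inV Y z N \<and> lip N N = 0 \<and> lip N (Dz Y z) = 0 \<and> lip (Y z) N = -1)"

definition schwarzian :: "(complex \<Rightarrow> complex^5) \<Rightarrow> complex \<Rightarrow> complex" where
  "schwarzian Y z = 2 * lip (Dz (Dz Y) z) (conormal Y z)"

definition hopf :: "(complex \<Rightarrow> complex^5) \<Rightarrow> complex \<Rightarrow> complex^5" where
  "hopf Y z = Dz (Dz Y) z + (schwarzian Y z / 2) *s Y z"

text \<open>xi_1 = <f_zz,N_1>, xi_2 = -<f_zz,N_2>, and H defined by f_zzbar = -e^{2u} f + e^{2u} H.\<close>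
definition xi1 :: "(complex \<Rightarrow> complex^5) \<Rightarrow> (complex \<Rightarrow> complex^5) \<Rightarrow> complex \<Rightarrow> complex" where
  "xi1 f N1 z = lip (Dz (Dz f) z) (N1 z)"

definition xi2 :: "(complex \<Rightarrow> complex^5) \<Rightarrow> (complex \<Rightarrow> complex^5) \<Rightarrow> complex \<Rightarrow> complex" where
  "xi2 f N2 z = - lip (Dz (Dz f) z) (N2 z)"

definition meanH :: "(complex \<Rightarrow> complex^5) \<Rightarrow> (complex \<Rightarrow> real) \<Rightarrow> complex \<Rightarrow> complex^5" where
  "meanH f u z = (1 / exp (2 * complex_of_real (u z))) *s Dzb (Dz f) z + f z"

end

theory Submission
  imports Defs
begin

lemma exhaust_5:
  fixes x :: 5
  shows "x = 0 \<or> x = 1 \<or> x = 2 \<or> x = 3 \<or> x = 4"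
proof (induct x)
  case (of_int z)
  then have "z = 0 \<or> z = 1 \<or> z = 2 \<or> z = 3 \<or> z = 4" by fastforce
  then show ?case by auto
qed

lemma forall_5: "(\<forall>i::5. P i) \<longleftrightarrow> P 0 \<and> P 1 \<and> P 2 \<and> P 3 \<and> P 4"
  by (metis exhaust_5)

lemma UNIV_5: "(UNIV::5 set) = {0,1,2,3,4}"
  using exhaust_5 by auto

lemma distinct_5: "(0::5) \<noteq> 1" "(0::5) \<noteq> 2" "(0::5) \<noteq> 3" "(0::5) \<noteq> 4"
  "(1::5) \<noteq> 2" "(1::5) \<noteq> 3" "(1::5) \<noteq> 4" "(2::5) \<noteq> 3" "(2::5) \<noteq> 4" "(3::5) \<noteq> 4"
  by simp_all

definition dd :: "complex \<Rightarrow> (complex \<Rightarrow> 'a::real_normed_vector) \<Rightarrow> complex \<Rightarrow> 'a" where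
  "dd v F z = vector_derivative (\<lambda>t. F (z + v * complex_of_real t)) (at 0)"

lemma dx_dd: "dx F = dd 1 F" and dy_dd: "dy F = dd \<i> F"
  by (auto simp: dx_def dy_def dd_def fun_eq_iff)

lemma dd_has:
  assumes "(F has_derivative F') (at z)"
  shows "dd v F z = F' v"
proof -
  have l: "linear F'" using assms has_derivative_linear by blast
  have 1: "((\<lambda>t. z + v * complex_of_real t) has_derivative (\<lambda>t. v * complex_of_real t)) (at 0)"
    by (auto intro!: derivative_eq_intros)
  have 2: "(F has_derivative F') (at (z + v * complex_of_real 0))" using assms by simp
  have "((\<lambda>t. F (z + v * complex_of_real t)) has_derivative (\<lambda>t. F' (v * complex_of_real t))) (at 0)"
    using has_derivative_compose[OF 1 2] by (simp add: o_def)
  moreover have "(\<lambda>t. F' (v * complex_of_real t)) = (\<lambda>t. t *\<^sub>R F' v)"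
  proof
    fix t
    have "v * complex_of_real t = t *\<^sub>R v" by (simp add: scaleR_conv_of_real mult.commute)
    then show "F' (v * complex_of_real t) = t *\<^sub>R F' v" using linear_scale[OF l] by simp
  qed
  ultimately have "((\<lambda>t. F (z + v * complex_of_real t)) has_vector_derivative F' v) (at 0)"
    by (simp add: has_vector_derivative_def)
  then show ?thesis unfolding dd_def by (rule vector_derivative_at)
qed

lemma dd_frechet:
  assumes "F differentiable (at z)"
  shows "dd v F z = frechet_derivative F (at z) v"
  using dd_has frechet_derivative_works assms by blast

lemma dd_cong:
  assumes "open U" "z \<in> U" "\<And>w. w \<in> U \<Longrightarrow> F w = G w"
  shows "dd v F z = dd v G z"
proof -
  have o: "open ((\<lambda>t::real. z + v * complex_of_real t) -` U)"
    by (intro open_vimage assms(1) continuous_intros)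
  have "eventually (\<lambda>t. t \<in> (\<lambda>t::real. z + v * complex_of_real t) -` U) (nhds 0)"
    by (rule eventually_nhds_in_open[OF o]) (simp add: assms(2))
  then have "eventually (\<lambda>t. z + v * complex_of_real t \<in> U) (nhds 0)" by simp
  then have "eventually (\<lambda>t. t \<in> UNIV \<longrightarrow> F (z + v * complex_of_real t) = G (z + v * complex_of_real t)) (nhds 0)"
    by (rule eventually_mono) (simp add: assms(3))
  then show ?thesis unfolding dd_def
    by (intro vector_derivative_cong_eq) auto
qed

lemma diff_cong:
  assumes "open U" "z \<in> U" "\<And>w. w \<in> U \<Longrightarrow> F w = G w" "G differentiable (at z)"
  shows "F differentiable (at z)"
  using assms has_derivative_transform_within_open[of G _ z UNIV U F]
  unfolding differentiable_def by metis


lemma has_derivative_vec: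
  fixes F :: "complex \<Rightarrow> 'a::real_normed_vector^'n"
  assumes "\<And>i. ((\<lambda>w. F w $ i) has_derivative F' i) (at z)"
  shows "(F has_derivative (\<lambda>h. \<chi> i. F' i h)) (at z)"
proof -
  have bl: "bounded_linear (\<lambda>h. \<chi> i. F' i h)"
  proof -
    have l: "linear (F' i)" for i using assms has_derivative_linear by blast
    have "linear (\<lambda>h. \<chi> i. F' i h)"
      unfolding linear_iff vec_eq_iff using l by (simp add: linear_add linear_scale)
    then show ?thesis using linear_conv_bounded_linear by blast
  qed
  have "((\<lambda>y. ((F y $ i - F z $ i) - F' i (y - z)) /\<^sub>R norm (y - z)) \<longlongrightarrow> 0) (at z)" for i
    using assms[of i] unfolding has_derivative_at_within by simp
  then have "((\<lambda>y. ((F y - F z) - (\<chi> i. F' i (y - z))) /\<^sub>R norm (y - z)) \<longlongrightarrow> 0) (at z)"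
  proof -
    assume a: "\<And>i. ((\<lambda>y. ((F y $ i - F z $ i) - F' i (y - z)) /\<^sub>R norm (y - z)) \<longlongrightarrow> 0) (at z)"
    have eq: "(\<lambda>y. ((F y - F z) - (\<chi> i. F' i (y - z))) /\<^sub>R norm (y - z)) =
       (\<lambda>y. \<chi> i. ((F y $ i - F z $ i) - F' i (y - z)) /\<^sub>R norm (y - z))"
      by (auto simp: vec_eq_iff)
    have "((\<lambda>y. \<chi> i. ((F y $ i - F z $ i) - F' i (y - z)) /\<^sub>R norm (y - z)) \<longlongrightarrow> (\<chi> i. 0)) (at z)"
      by (rule tendsto_vec_lambda) (rule a)
    then show ?thesis unfolding eq by (simp add: zero_vec_def)
  qed
  then show ?thesis using bl unfolding has_derivative_at_within by simp
qed


lemma smooth_D: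
  assumes "smooth_on U F"
  shows "F differentiable_on U" "smooth_on U (dx F)" "smooth_on U (dy F)"
  using smooth_on.simps[of U F] assms by auto

lemma smooth_dd:
  assumes "smooth_on U F" "v = 1 \<or> v = \<i>"
  shows "smooth_on U (dd v F)"
  using smooth_D(2,3)[OF assms(1)] assms(2) unfolding dx_dd dy_dd by blast

lemma smooth_diff:
  assumes "open U" "smooth_on U F" "z \<in> U"
  shows "F differentiable (at z)"
proof -
  have "F differentiable (at z within U)" using smooth_D(1)[OF assms(2)] assms(3) unfolding differentiable_on_def by blast
  then show ?thesis using at_within_open[OF assms(3,1)] by simp
qed

lemma smooth_coinduct_U:
  assumes U: "open U" and X: "X F"
    and step: "\<And>G. X G \<Longrightarrow> (\<forall>z\<in>U. G differentiable (at z)) \<and>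
        (\<exists>H. X H \<and> (\<forall>z\<in>U. dd 1 G z = H z)) \<and> (\<exists>H. X H \<and> (\<forall>z\<in>U. dd \<i> G z = H z))"
  shows "smooth_on U F"
proof -
  define X' where "X' = (\<lambda>V G. V = U \<and> (\<exists>H. X H \<and> (\<forall>z\<in>U. G z = H z)))"
  have "X' U F" unfolding X'_def using X by auto
  then show ?thesis
  proof (rule smooth_on.coinduct[of X'])
    fix V G assume "X' V G"
    then obtain H where V: "V = U" and XH: "X H" and GH: "\<forall>z\<in>U. G z = H z"
      unfolding X'_def by auto
    from step[OF XH] obtain H1 H2 where d: "\<forall>z\<in>U. H differentiable (at z)"
      and H1: "X H1" "\<forall>z\<in>U. dd 1 H z = H1 z" and H2: "X H2" "\<forall>z\<in>U. dd \<i> H z = H2 z"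
      by blast
    have "G differentiable (at z within U)" if "z \<in> U" for z
      using diff_cong[OF U that, of G H] d GH that by (simp add: differentiable_at_withinI)
    then have "G differentiable_on U"
      unfolding differentiable_on_def by blast
    moreover have "X' V (dx G)"
      unfolding X'_def V dx_dd using H1 dd_cong[OF U, of _ G H] GH by metis
    moreover have "X' V (dy G)"
      unfolding X'_def V dy_dd using H2 dd_cong[OF U, of _ G H] GH by metis
    ultimately show "\<exists>F U. V = U \<and> G = F \<and> F differentiable_on U \<and>
          (X' U (dx F) \<or> smooth_on U (dx F)) \<and> (X' U (dy F) \<or> smooth_on U (dy F))"
      using V by auto
  qed
qed

lemma smooth_cong:
  assumes "open U" "smooth_on U G" "\<And>z. z \<in> U \<Longrightarrow> F z = G z"
  shows "smooth_on U F"
proof -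
  have "smooth_on U G" by fact
  have "smooth_on U F"
  proof (rule smooth_coinduct_U[OF assms(1), where X="\<lambda>H. (\<exists>G. smooth_on U G \<and> (\<forall>z\<in>U. H z = G z))"])
    show "\<exists>G. smooth_on U G \<and> (\<forall>z\<in>U. F z = G z)" using assms by auto
  next
    fix H assume "\<exists>G. smooth_on U G \<and> (\<forall>z\<in>U. H z = G z)"
    then obtain G where G: "smooth_on U G" "\<forall>z\<in>U. H z = G z" by auto
    have "\<forall>z\<in>U. H differentiable (at z)"
      using diff_cong[OF assms(1)] smooth_diff[OF assms(1) G(1)] G(2) by metis
    moreover have "\<forall>z\<in>U. dd v H z = dd v G z" for v
      using dd_cong[OF assms(1)] G(2) by metis
    ultimately show "(\<forall>z\<in>U. H differentiable (at z)) \<and>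
        (\<exists>Ha. (\<exists>G. smooth_on U G \<and> (\<forall>z\<in>U. Ha z = G z)) \<and> (\<forall>z\<in>U. dd 1 H z = Ha z)) \<and>
        (\<exists>Ha. (\<exists>G. smooth_on U G \<and> (\<forall>z\<in>U. Ha z = G z)) \<and> (\<forall>z\<in>U. dd \<i> H z = Ha z))"
      using smooth_dd[OF G(1)] by blast
  qed
  then show ?thesis .
qed

lemma dd_linear:
  assumes "bounded_linear L" "F differentiable (at z)"
  shows "dd v (\<lambda>w. L (F w)) z = L (dd v F z)"
proof -
  obtain F' where F': "(F has_derivative F') (at z)" using assms(2) unfolding differentiable_def by blast
  have "((\<lambda>w. L (F w)) has_derivative (\<lambda>h. L (F' h))) (at z)"
    using bounded_linear.has_derivative[OF assms(1) F'] .
  then show ?thesis using dd_has F' by metis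
qed

lemma diff_linear:
  assumes "bounded_linear L" "F differentiable (at z)"
  shows "(\<lambda>w. L (F w)) differentiable (at z)"
  using assms bounded_linear.has_derivative unfolding differentiable_def by blast

lemma smooth_linear:
  assumes U: "open U" and L: "bounded_linear L" and F: "smooth_on U F"
  shows "smooth_on U (\<lambda>z. L (F z))"
proof (rule smooth_coinduct_U[OF U, where X="\<lambda>H. \<exists>G. smooth_on U G \<and> H = (\<lambda>z. L (G z))"])
  show "\<exists>G. smooth_on U G \<and> (\<lambda>z. L (F z)) = (\<lambda>z. L (G z))" using F by auto
next
  fix H assume "\<exists>G. smooth_on U G \<and> H = (\<lambda>z. L (G z))"
  then obtain G where G: "smooth_on U G" "H = (\<lambda>z. L (G z))" by auto
  have d: "\<forall>z\<in>U. G differentiable (at z)" using smooth_diff[OF U G(1)] by auto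
  have "\<forall>z\<in>U. H differentiable (at z)" using diff_linear[OF L] d G(2) by auto
  moreover have "\<forall>z\<in>U. dd v H z = L (dd v G z)" for v using dd_linear[OF L] d G(2) by auto
  ultimately show "(\<forall>z\<in>U. H differentiable (at z)) \<and>
        (\<exists>Ha. (\<exists>G. smooth_on U G \<and> Ha = (\<lambda>z. L (G z))) \<and> (\<forall>z\<in>U. dd 1 H z = Ha z)) \<and>
        (\<exists>Ha. (\<exists>G. smooth_on U G \<and> Ha = (\<lambda>z. L (G z))) \<and> (\<forall>z\<in>U. dd \<i> H z = Ha z))"
    using smooth_dd[OF G(1)] by blast
qed

lemma dd_add:
  assumes "F differentiable (at z)" "G differentiable (at z)"
  shows "dd v (\<lambda>w. F w + G w) z = dd v F z + dd v G z"
proof -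
  obtain F' G' where F': "(F has_derivative F') (at z)" and G': "(G has_derivative G') (at z)"
    using assms unfolding differentiable_def by blast
  have "((\<lambda>w. F w + G w) has_derivative (\<lambda>h. F' h + G' h)) (at z)"
    using has_derivative_add[OF F' G'] .
  then show ?thesis using dd_has F' G' by metis
qed

lemma smooth_add:
  assumes U: "open U" and F: "smooth_on U F" and G: "smooth_on U G"
  shows "smooth_on U (\<lambda>z. F z + G z)"
proof (rule smooth_coinduct_U[OF U, where X="\<lambda>H. \<exists>F G. smooth_on U F \<and> smooth_on U G \<and> H = (\<lambda>z. F z + G z)"])
  show "\<exists>F' G'. smooth_on U F' \<and> smooth_on U G' \<and> (\<lambda>z. F z + G z) = (\<lambda>z. F' z + G' z)"
    using F G by auto
next
  fix H assume "\<exists>F G. smooth_on U F \<and> smooth_on U G \<and> H = (\<lambda>z. F z + G z)"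
  then obtain F G where FG: "smooth_on U F" "smooth_on U G" "H = (\<lambda>z. F z + G z)" by auto
  have d: "\<forall>z\<in>U. F differentiable (at z) \<and> G differentiable (at z)"
    using smooth_diff[OF U FG(1)] smooth_diff[OF U FG(2)] by auto
  have "\<forall>z\<in>U. H differentiable (at z)" using d FG(3) by auto
  moreover have "\<forall>z\<in>U. dd v H z = dd v F z + dd v G z" for v
  proof
    fix z assume "z \<in> U"
    then show "dd v H z = dd v F z + dd v G z" using dd_add[of F z G v] d FG(3) by simp
  qed
  moreover have "v = 1 \<or> v = \<i> \<Longrightarrow> (\<exists>Ha. (\<exists>F G. smooth_on U F \<and> smooth_on U G \<and> Ha = (\<lambda>z. F z + G z)) \<and> (\<forall>z\<in>U. dd v H z = Ha z))" for v
  proof -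
    assume v: "v = 1 \<or> v = \<i>"
    have "smooth_on U (dd v F)" "smooth_on U (dd v G)" using smooth_dd FG v by auto
    then show ?thesis using calculation(2)[of v]
      by (intro exI[of _ "\<lambda>z. dd v F z + dd v G z"] conjI exI[of _ "dd v F"] exI[of _ "dd v G"]) auto
  qed
  ultimately show "(\<forall>z\<in>U. H differentiable (at z)) \<and>
        (\<exists>Ha. (\<exists>F G. smooth_on U F \<and> smooth_on U G \<and> Ha = (\<lambda>z. F z + G z)) \<and> (\<forall>z\<in>U. dd 1 H z = Ha z)) \<and>
        (\<exists>Ha. (\<exists>F G. smooth_on U F \<and> smooth_on U G \<and> Ha = (\<lambda>z. F z + G z)) \<and> (\<forall>z\<in>U. dd \<i> H z = Ha z))"
    by simp
qed

lemma smooth_const: "open U \<Longrightarrow> smooth_on U (\<lambda>z. c::'a::real_normed_vector)"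
proof (rule smooth_coinduct_U[where X="\<lambda>H. \<exists>c. H = (\<lambda>z. c)"])
  fix H :: "complex \<Rightarrow> 'a" assume "\<exists>c. H = (\<lambda>z::complex. c)"
  then obtain c where H: "H = (\<lambda>z. c)" by auto
  have "dd v H z = 0" for v z using dd_has[of H "\<lambda>_. 0" z v] H by simp
  then show "(\<forall>z\<in>U. H differentiable (at z)) \<and> (\<exists>Ha. (\<exists>c. Ha = (\<lambda>z. c)) \<and> (\<forall>z\<in>U. dd 1 H z = Ha z)) \<and>
         (\<exists>Ha. (\<exists>c. Ha = (\<lambda>z. c)) \<and> (\<forall>z\<in>U. dd \<i> H z = Ha z))" using H by auto
qed auto

lemma dd_vec_nth:
  assumes "F differentiable (at z)"
  shows "dd v F z $ i = dd v (\<lambda>w. F w $ i) z"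
  using dd_linear[OF bounded_linear_vec_nth assms] by simp

lemma smooth_nth:
  assumes "open U" "smooth_on U F"
  shows "smooth_on U (\<lambda>z. F z $ i)"
  using smooth_linear[OF assms(1) bounded_linear_vec_nth assms(2)] .

lemma diff_vec:
  fixes F :: "complex \<Rightarrow> 'a::real_normed_vector^'n"
  assumes "\<And>i. (\<lambda>w. F w $ i) differentiable (at z)"
  shows "F differentiable (at z)"
proof -
  obtain F' where "\<And>i. ((\<lambda>w. F w $ i) has_derivative F' i) (at z)"
    using assms unfolding differentiable_def by metis
  then show ?thesis using has_derivative_vec unfolding differentiable_def by blast
qed

lemma smooth_vec:
  fixes F :: "complex \<Rightarrow> 'a::real_normed_vector^'n"
  assumes U: "open U" and c: "\<And>i. smooth_on U (\<lambda>z. F z $ i)"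
  shows "smooth_on U F"
proof (rule smooth_coinduct_U[OF U, where X="\<lambda>H. \<forall>i. smooth_on U (\<lambda>z. H z $ i)"])
  show "\<forall>i. smooth_on U (\<lambda>z. F z $ i)" using c by auto
next
  fix H :: "complex \<Rightarrow> 'a^'n" assume H: "\<forall>i. smooth_on U (\<lambda>z. H z $ i)"
  have d: "\<forall>z\<in>U. H differentiable (at z)"
    using diff_vec smooth_diff[OF U] H by metis
  have "\<forall>z\<in>U. dd v H z $ i = dd v (\<lambda>w. H w $ i) z" for v i
  proof
    fix z assume "z \<in> U"
    then show "dd v H z $ i = dd v (\<lambda>w. H w $ i) z" using dd_vec_nth[of H z v i] d by simp
  qed
  moreover have "v = 1 \<or> v = \<i> \<Longrightarrow> smooth_on U (\<lambda>z. (\<chi> i. dd v (\<lambda>w. H w $ i) z) $ i)" for v i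
    using smooth_dd[of U "\<lambda>w. H w $ i" v] H by simp
  ultimately have "v = 1 \<or> v = \<i> \<Longrightarrow> (\<exists>Ha. (\<forall>i. smooth_on U (\<lambda>z. Ha z $ i)) \<and> (\<forall>z\<in>U. dd v H z = Ha z))" for v
    by (intro exI[of _ "\<lambda>z. \<chi> i. dd v (\<lambda>w. H w $ i) z"]) (auto simp: vec_eq_iff)
  then show "(\<forall>z\<in>U. H differentiable (at z)) \<and>
         (\<exists>Ha. (\<forall>i. smooth_on U (\<lambda>z. Ha z $ i)) \<and> (\<forall>z\<in>U. dd 1 H z = Ha z)) \<and>
         (\<exists>Ha. (\<forall>i. smooth_on U (\<lambda>z. Ha z $ i)) \<and> (\<forall>z\<in>U. dd \<i> H z = Ha z))"
    using d by simp
qed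


datatype ce = Bs "complex \<Rightarrow> complex" | Ad ce ce | Mu ce ce | Cj ce | Ex ce | Pw real ce

fun ev :: "ce \<Rightarrow> complex \<Rightarrow> complex" where
  "ev (Bs g) = g"
| "ev (Ad a b) = (\<lambda>z. ev a z + ev b z)"
| "ev (Mu a b) = (\<lambda>z. ev a z * ev b z)"
| "ev (Cj a) = (\<lambda>z. cnj (ev a z))"
| "ev (Ex a) = (\<lambda>z. exp (ev a z))"
| "ev (Pw r a) = (\<lambda>z. complex_of_real (Re (ev a z) powr r))"

fun wf :: "complex set \<Rightarrow> ce \<Rightarrow> bool" where
  "wf U (Bs g) = smooth_on U g"
| "wf U (Ad a b) = (wf U a \<and> wf U b)"
| "wf U (Mu a b) = (wf U a \<and> wf U b)"
| "wf U (Cj a) = wf U a"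
| "wf U (Ex a) = wf U a"
| "wf U (Pw r a) = (wf U a \<and> (\<forall>z\<in>U. Re (ev a z) > 0))"

fun de :: "complex \<Rightarrow> ce \<Rightarrow> ce" where
  "de v (Bs g) = Bs (dd v g)"
| "de v (Ad a b) = Ad (de v a) (de v b)"
| "de v (Mu a b) = Ad (Mu (de v a) b) (Mu a (de v b))"
| "de v (Cj a) = Cj (de v a)"
| "de v (Ex a) = Mu (Ex a) (de v a)"
| "de v (Pw r a) = Mu (Mu (Bs (\<lambda>_. complex_of_real r)) (Pw (r-1) a)) (Mu (Bs (\<lambda>_. 1/2)) (Ad (de v a) (Cj (de v a))))"

lemma de_main:
  assumes U: "open U" and v: "v = 1 \<or> v = \<i>"
  shows "wf U e \<Longrightarrow> wf U (de v e) \<and> (\<forall>z\<in>U. ev e differentiable (at z) \<and> dd v (ev e) z = ev (de v e) z)"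
proof (induction e)
  case (Bs g)
  then show ?case using smooth_dd[OF _ v] smooth_diff[OF U] by auto
next
  case (Ad a b)
  then show ?case using dd_add[of "ev a" _ "ev b" v] by auto
next
  case (Mu a b)
  have w: "wf U (de v (Mu a b))" using Mu by auto
  have "ev (Mu a b) differentiable (at z) \<and> dd v (ev (Mu a b)) z = ev (de v (Mu a b)) z" if z: "z \<in> U" for z
  proof -
    have "ev a differentiable (at z)" "ev b differentiable (at z)" using Mu z by auto
    then obtain A' Bs' where A': "(ev a has_derivative A') (at z)" and Bs': "(ev b has_derivative Bs') (at z)"
      unfolding differentiable_def by auto
    have P: "((\<lambda>w. ev a w * ev b w) has_derivative (\<lambda>h. ev a z * Bs' h + A' h * ev b z)) (at z)"
      using has_derivative_mult[OF A' Bs'] .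
    have "dd v (ev a) z = A' v" "dd v (ev b) z = Bs' v" using dd_has A' Bs' by auto
    moreover have "dd v (ev a) z = ev (de v a) z" "dd v (ev b) z = ev (de v b) z" using Mu z by auto
    ultimately show ?thesis using P dd_has[OF P] unfolding differentiable_def by (auto simp: algebra_simps)
  qed
  then show ?case using w by blast
next
  case (Cj a)
  have "ev (Cj a) differentiable (at z) \<and> dd v (ev (Cj a)) z = ev (de v (Cj a)) z" if z: "z \<in> U" for z
  proof -
    have d: "ev a differentiable (at z)" using Cj z by auto
    show ?thesis using dd_linear[OF bounded_linear_cnj d] diff_linear[OF bounded_linear_cnj d] Cj z by auto
  qed
  then show ?case using Cj by auto
next
  case (Ex a)
  have w: "wf U (de v (Ex a))" using Ex by auto
  have "ev (Ex a) differentiable (at z) \<and> dd v (ev (Ex a)) z = ev (de v (Ex a)) z" if z: "z \<in> U" for z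
  proof -
    have "ev a differentiable (at z)" using Ex z by auto
    then obtain A' where A': "(ev a has_derivative A') (at z)"
      unfolding differentiable_def by auto
    have E: "(exp has_derivative (\<lambda>h. exp (ev a z) * h)) (at (ev a z))"
      using DERIV_exp[of "ev a z"] by (simp add: has_field_derivative_def)
    have P: "((\<lambda>w. exp (ev a w)) has_derivative (\<lambda>h. exp (ev a z) * A' h)) (at z)"
      using has_derivative_compose[OF A' E] by (simp add: o_def)
    have "dd v (ev a) z = A' v" using dd_has A' by auto
    moreover have "dd v (ev a) z = ev (de v a) z" using Ex z by auto
    ultimately show ?thesis using P dd_has[OF P] unfolding differentiable_def by auto
  qed
  then show ?case using w by blast
next
  case (Pw r a)
  have w: "wf U (de v (Pw r a))" using Pw smooth_const[OF U] by auto
  have "ev (Pw r a) differentiable (at z) \<and> dd v (ev (Pw r a)) z = ev (de v (Pw r a)) z" if z: "z \<in> U" for z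
  proof -
    have "ev a differentiable (at z)" using Pw z by auto
    then obtain A' where A': "(ev a has_derivative A') (at z)"
      unfolding differentiable_def by auto
    have pos: "Re (ev a z) > 0" using Pw z by auto
    have R: "((\<lambda>w. Re (ev a w)) has_derivative (\<lambda>h. Re (A' h))) (at z)"
      using bounded_linear.has_derivative[OF bounded_linear_Re A'] .
    have E: "((\<lambda>x. x powr r) has_derivative (\<lambda>h. r * Re (ev a z) powr (r - 1) * h)) (at (Re (ev a z)))"
      using has_real_derivative_powr[OF pos, of r] by (simp add: has_field_derivative_def)
    have P0: "((\<lambda>w. Re (ev a w) powr r) has_derivative (\<lambda>h. r * Re (ev a z) powr (r - 1) * Re (A' h))) (at z)"
      using has_derivative_compose[OF R E] by (simp add: o_def)
    have P: "((\<lambda>w. complex_of_real (Re (ev a w) powr r)) has_derivative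
              (\<lambda>h. complex_of_real (r * Re (ev a z) powr (r - 1) * Re (A' h)))) (at z)"
      using bounded_linear.has_derivative[OF bounded_linear_of_real P0] .
    have "dd v (ev a) z = A' v" using dd_has A' by auto
    moreover have "dd v (ev a) z = ev (de v a) z" using Pw z by auto
    moreover have "complex_of_real (Re x) = (1/2) * (x + cnj x)" for x
      by (simp add: complex_eq_iff)
    ultimately show ?thesis using P dd_has[OF P] unfolding differentiable_def by auto
  qed
  then show ?case using w by blast
qed

lemma smooth_ev:
  assumes U: "open U" and w: "wf U e"
  shows "smooth_on U (ev e)"
proof (rule smooth_coinduct_U[OF U, where X="\<lambda>H. \<exists>e. wf U e \<and> H = ev e"])
  show "\<exists>e'. wf U e' \<and> ev e = ev e'" using w by auto
next
  fix H assume "\<exists>e. wf U e \<and> H = ev e"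
  then obtain e where e: "wf U e" "H = ev e" by auto
  have m: "v = 1 \<or> v = \<i> \<Longrightarrow> wf U (de v e) \<and> (\<forall>z\<in>U. ev e differentiable (at z) \<and> dd v (ev e) z = ev (de v e) z)" for v
    using de_main[OF U _ e(1)] by blast
  have ex: "\<exists>Ha. (\<exists>e. wf U e \<and> Ha = ev e) \<and> (\<forall>z\<in>U. dd v H z = Ha z)" if "v = 1 \<or> v = \<i>" for v
    using m[OF that] e(2) by (intro exI[of _ "ev (de v e)"]) auto
  then show "(\<forall>z\<in>U. H differentiable (at z)) \<and>
         (\<exists>Ha. (\<exists>e. wf U e \<and> Ha = ev e) \<and> (\<forall>z\<in>U. dd 1 H z = Ha z)) \<and>
         (\<exists>Ha. (\<exists>e. wf U e \<and> Ha = ev e) \<and> (\<forall>z\<in>U. dd \<i> H z = Ha z))"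
  proof (intro conjI)
    show "\<forall>z\<in>U. H differentiable (at z)" using m[of 1] e(2) by simp
  qed (use ex[of 1] ex[of \<i>] in simp_all)
qed

lemma smooth_mult:
  fixes a b :: "complex \<Rightarrow> complex"
  assumes "open U" "smooth_on U a" "smooth_on U b"
  shows "smooth_on U (\<lambda>z. a z * b z)"
  using smooth_ev[OF assms(1), of "Mu (Bs a) (Bs b)"] assms by simp

lemma smooth_cnj:
  fixes a :: "complex \<Rightarrow> complex"
  assumes "open U" "smooth_on U a"
  shows "smooth_on U (\<lambda>z. cnj (a z))"
  using smooth_ev[OF assms(1), of "Cj (Bs a)"] assms by simp

lemma smooth_exp:
  fixes a :: "complex \<Rightarrow> complex"
  assumes "open U" "smooth_on U a"
  shows "smooth_on U (\<lambda>z. exp (a z))"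
  using smooth_ev[OF assms(1), of "Ex (Bs a)"] assms by simp

lemma smooth_powr:
  fixes a :: "complex \<Rightarrow> complex"
  assumes "open U" "smooth_on U a" "\<forall>z\<in>U. Re (a z) > 0"
  shows "smooth_on U (\<lambda>z. complex_of_real (Re (a z) powr r))"
  using smooth_ev[OF assms(1), of "Pw r (Bs a)"] assms by simp

lemma smooth_inv_cmod:
  fixes a :: "complex \<Rightarrow> complex"
  assumes U: "open U" and a: "smooth_on U a" and nz: "\<forall>z\<in>U. a z \<noteq> 0"
  shows "smooth_on U (\<lambda>z. complex_of_real (1 / cmod (a z)))"
proof -
  have s: "smooth_on U (\<lambda>z. a z * cnj (a z))" using smooth_mult[OF U a smooth_cnj[OF U a]] .
  have p: "\<forall>z\<in>U. Re (a z * cnj (a z)) > 0"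
  proof
    fix z assume "z \<in> U"
    then have "cmod (a z) > 0" using nz by simp
    moreover have "Re (a z * cnj (a z)) = (cmod (a z))^2" by (simp add: complex_mult_cnj cmod_power2)
    ultimately show "Re (a z * cnj (a z)) > 0" by simp
  qed
  have e: "Re (a z * cnj (a z)) powr (-1/2) = 1 / cmod (a z)" if "a z \<noteq> 0" for z
  proof -
    have x: "cmod (a z) > 0" using that by simp
    have "Re (a z * cnj (a z)) = (cmod (a z)) powr 2"
    proof -
      have "Re (a z * cnj (a z)) = (cmod (a z))^2" by (simp add: complex_mult_cnj cmod_power2)
      then show ?thesis using x by (simp add: powr_numeral)
    qed
    then have "Re (a z * cnj (a z)) powr (-1/2) = cmod (a z) powr (2 * (-1/2))"
      by (simp only: powr_powr)
    also have "\<dots> = 1 / cmod (a z)" using x by (simp add: powr_minus_divide)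
    finally show ?thesis .
  qed
  show ?thesis
    by (rule smooth_cong[OF U smooth_powr[OF U s p, of "-1/2"]]) (use e nz in auto)
qed

lemma smooth_of_real:
  fixes u :: "complex \<Rightarrow> real"
  assumes "open U" "smooth_on U u"
  shows "smooth_on U (\<lambda>z. complex_of_real (u z))"
  using smooth_linear[OF assms(1) bounded_linear_of_real assms(2)] .

lemma smooth_minus:
  assumes "open U" "smooth_on U F"
  shows "smooth_on U (\<lambda>z. - F z)"
  using smooth_linear[OF assms(1) bounded_linear_minus[OF bounded_linear_ident] assms(2)] by simp

lemma smooth_sub:
  assumes "open U" "smooth_on U F" "smooth_on U G"
  shows "smooth_on U (\<lambda>z. F z - G z)"
  using smooth_add[OF assms(1,2) smooth_minus[OF assms(1,3)]] by simp

lemma smooth_scale: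
  fixes a :: "complex \<Rightarrow> complex" and F :: "complex \<Rightarrow> complex^5"
  assumes U: "open U" and "smooth_on U a" "smooth_on U F"
  shows "smooth_on U (\<lambda>z. a z *s F z)"
  by (rule smooth_vec[OF U]) (simp add: smooth_mult[OF U assms(2) smooth_nth[OF U assms(3)]])

lemma smooth_lip:
  assumes U: "open U" and "smooth_on U F" "smooth_on U G"
  shows "smooth_on U (\<lambda>z. lip (F z) (G z))"
proof -
  have m: "smooth_on U (\<lambda>z. F z $ i * G z $ i)" for i
    using smooth_mult[OF U smooth_nth[OF U assms(2)] smooth_nth[OF U assms(3)]] .
  show ?thesis unfolding lip_def
    by (intro smooth_add[OF U] smooth_sub[OF U] m)
qed


lemma dd_line:
  assumes "F differentiable (at (c + v * complex_of_real s))"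
  shows "((\<lambda>t. F (c + v * complex_of_real t)) has_vector_derivative dd v F (c + v * complex_of_real s)) (at s)"
proof -
  obtain F' where F': "(F has_derivative F') (at (c + v * complex_of_real s))"
    using assms unfolding differentiable_def by blast
  have l: "linear F'" using F' has_derivative_linear by blast
  have 1: "((\<lambda>t. c + v * complex_of_real t) has_derivative (\<lambda>t. v * complex_of_real t)) (at s)"
    by (auto intro!: derivative_eq_intros)
  have "((\<lambda>t. F (c + v * complex_of_real t)) has_derivative (\<lambda>t. F' (v * complex_of_real t))) (at s)"
    using has_derivative_compose[OF 1 F'] by (simp add: o_def)
  moreover have "(\<lambda>t. F' (v * complex_of_real t)) = (\<lambda>t. t *\<^sub>R F' v)"
  proof
    fix t
    have "v * complex_of_real t = t *\<^sub>R v" by (simp add: scaleR_conv_of_real mult.commute)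
    then show "F' (v * complex_of_real t) = t *\<^sub>R F' v" using linear_scale[OF l] by simp
  qed
  ultimately show ?thesis using dd_has[OF F'] by (simp add: has_vector_derivative_def)
qed

lemma approx_bound:
  fixes a :: "complex \<Rightarrow> real"
  assumes A: "\<forall>y. norm (y - z) < d \<longrightarrow> norm (a y - a z - A' (y - z)) \<le> e * norm (y - z)"
    and l: "linear A'" and w: "norm w1 < d" "norm w2 < d"
  shows "\<bar>(a (z + w1) - a (z + w2)) - A' (w1 - w2)\<bar> \<le> e * (norm w1 + norm w2)"
proof -
  have 1: "\<bar>a (z + w1) - a z - A' w1\<bar> \<le> e * norm w1" using A[rule_format, of "z + w1"] w by simp
  have 2: "\<bar>a (z + w2) - a z - A' w2\<bar> \<le> e * norm w2" using A[rule_format, of "z + w2"] w by simp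
  have "A' (w1 - w2) = A' w1 - A' w2" using linear_diff[OF l] by simp
  then show ?thesis using 1 2 by (simp add: algebra_simps abs_if split: if_splits; linarith)
qed

lemma schwarz_real:
  fixes \<phi> :: "complex \<Rightarrow> real"
  assumes U: "open U" and s: "smooth_on U \<phi>" and z: "z \<in> U"
  shows "dd \<i> (dd 1 \<phi>) z = dd 1 (dd \<i> \<phi>) z"
proof -
  define a where "a = dd 1 \<phi>"
  define b where "b = dd \<i> \<phi>"
  have sa: "smooth_on U a" unfolding a_def using smooth_dd[OF s] by simp
  have sb: "smooth_on U b" unfolding b_def using smooth_dd[OF s] by simp
  obtain A' where A': "(a has_derivative A') (at z)" using smooth_diff[OF U sa z] unfolding differentiable_def by blast
  obtain B' where B': "(b has_derivative B') (at z)" using smooth_diff[OF U sb z] unfolding differentiable_def by blast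
  have la: "linear A'" using A' has_derivative_linear by blast
  have lb: "linear B'" using B' has_derivative_linear by blast
  have da: "dd \<i> a z = A' \<i>" using dd_has[OF A'] .
  have db: "dd 1 b z = B' 1" using dd_has[OF B'] .
  obtain r0 where r0: "r0 > 0" "ball z r0 \<subseteq> U" using U z open_contains_ball by blast
  have dphi: "\<phi> differentiable (at p)" if "dist z p < r0" for p
    using smooth_diff[OF U s] r0 that by auto
  have Ascale: "A' (\<i> * complex_of_real h) = h * A' \<i>" for h
    using linear_scale[OF la, of h \<i>] by (simp add: scaleR_conv_of_real mult.commute)
  have Bscale: "B' (complex_of_real h) = h * B' 1" for h
    using linear_scale[OF lb, of h 1] by (simp add: scaleR_conv_of_real)
  show ?thesis
  proof (rule ccontr)
    assume "dd \<i> (dd 1 \<phi>) z \<noteq> dd 1 (dd \<i> \<phi>) z"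
    then have ne: "A' \<i> \<noteq> B' 1" using da db a_def b_def by simp
    define e where "e = \<bar>A' \<i> - B' 1\<bar> / 7"
    have e0: "e > 0" using ne unfolding e_def by simp
    obtain da' where da': "da' > 0" "\<forall>y. norm (y - z) < da' \<longrightarrow> norm (a y - a z - A' (y - z)) \<le> e * norm (y - z)"
      using A' e0 unfolding has_derivative_at_alt by blast
    obtain db' where db': "db' > 0" "\<forall>y. norm (y - z) < db' \<longrightarrow> norm (b y - b z - B' (y - z)) \<le> e * norm (y - z)"
      using B' e0 unfolding has_derivative_at_alt by blast
    define d where "d = min (min da' db') r0"
    have d0: "d > 0" using da' db' r0 d_def by simp
    define h where "h = d / 4"
    have h0: "h > 0" using d0 h_def by simp
    have hd: "2 * h < d" using d0 h_def by simp
    have dA: "\<forall>y. norm (y - z) < d \<longrightarrow> norm (a y - a z - A' (y - z)) \<le> e * norm (y - z)"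
      using da' d_def by auto
    have dB: "\<forall>y. norm (y - z) < d \<longrightarrow> norm (b y - b z - B' (y - z)) \<le> e * norm (y - z)"
      using db' d_def by auto
    have small: "norm w < d \<Longrightarrow> dist z (z + w) < r0" for w using d_def by (simp add: dist_norm)
    define \<Delta> where "\<Delta> = \<phi> (z + complex_of_real h + \<i> * complex_of_real h) - \<phi> (z + complex_of_real h)
         - \<phi> (z + \<i> * complex_of_real h) + \<phi> z"
    define g where "g = (\<lambda>t. \<phi> (z + \<i> * complex_of_real h + 1 * complex_of_real t) - \<phi> (z + 1 * complex_of_real t))"
    have gder: "DERIV g t :> a (z + \<i> * complex_of_real h + 1 * complex_of_real t) - a (z + 1 * complex_of_real t)"
      if "0 \<le> t" "t \<le> h" for t
    proof -
      have n1: "norm (\<i> * complex_of_real h + complex_of_real t) < d"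
      proof -
        have "norm (\<i> * complex_of_real h + complex_of_real t) \<le> h + t"
          using norm_triangle_ineq[of "\<i> * complex_of_real h" "complex_of_real t"] that h0 by (simp add: norm_mult)
        then show ?thesis using that hd by linarith
      qed
      have n2: "norm (complex_of_real t) < d" using that hd h0 by simp
      have 1: "\<phi> differentiable (at (z + \<i> * complex_of_real h + 1 * complex_of_real t))"
        using dphi small[OF n1] by (simp add: add.assoc)
      have 2: "\<phi> differentiable (at (z + 1 * complex_of_real t))"
        using dphi small[OF n2] by simp
      have "(g has_vector_derivative a (z + \<i> * complex_of_real h + 1 * complex_of_real t) - a (z + 1 * complex_of_real t)) (at t)"
        unfolding g_def a_def
        by (intro has_vector_derivative_diff dd_line 1 2)
      then show ?thesis by (simp add: has_real_derivative_iff_has_vector_derivative)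
    qed
    obtain \<tau> where tau: "0 < \<tau>" "\<tau> < h" "g h - g 0 = (h - 0) * (a (z + \<i> * complex_of_real h + 1 * complex_of_real \<tau>) - a (z + 1 * complex_of_real \<tau>))"
      using MVT2[OF h0, of g "\<lambda>t. a (z + \<i> * complex_of_real h + 1 * complex_of_real t) - a (z + 1 * complex_of_real t)"] gder by auto
    have gD: "g h - g 0 = \<Delta>" unfolding g_def \<Delta>_def by (simp add: algebra_simps)
    have boundA: "\<bar>(a (z + (\<i> * complex_of_real h + complex_of_real \<tau>)) - a (z + complex_of_real \<tau>)) - A' (\<i> * complex_of_real h)\<bar> \<le> e * (3 * h)"
    proof -
      have n1: "norm (\<i> * complex_of_real h + complex_of_real \<tau>) \<le> 2 * h"
        using norm_triangle_ineq[of "\<i> * complex_of_real h" "complex_of_real \<tau>"] tau h0 by (simp add: norm_mult)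
      have n2: "norm (complex_of_real \<tau>) \<le> h" using tau by simp
      have "\<bar>(a (z + (\<i> * complex_of_real h + complex_of_real \<tau>)) - a (z + complex_of_real \<tau>)) - A' ((\<i> * complex_of_real h + complex_of_real \<tau>) - complex_of_real \<tau>)\<bar>
            \<le> e * (norm (\<i> * complex_of_real h + complex_of_real \<tau>) + norm (complex_of_real \<tau>))"
        by (rule approx_bound[OF dA la]) (use n1 n2 hd h0 in auto)
      also have "\<dots> \<le> e * (3 * h)" using n1 n2 e0 by (intro mult_left_mono) auto
      finally show ?thesis by simp
    qed
    have EA: "\<bar>\<Delta> - h * h * A' \<i>\<bar> \<le> 3 * e * h * h"
    proof -
      have "\<Delta> - h * h * A' \<i> = h * ((a (z + (\<i> * complex_of_real h + complex_of_real \<tau>)) - a (z + complex_of_real \<tau>)) - A' (\<i> * complex_of_real h))"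
        using tau(3) gD Ascale by (simp add: algebra_simps add.assoc)
      then have "\<bar>\<Delta> - h * h * A' \<i>\<bar> = h * \<bar>(a (z + (\<i> * complex_of_real h + complex_of_real \<tau>)) - a (z + complex_of_real \<tau>)) - A' (\<i> * complex_of_real h)\<bar>"
        using h0 by (simp add: abs_mult)
      also have "\<dots> \<le> h * (e * (3 * h))" using boundA h0 by (intro mult_left_mono) auto
      finally show ?thesis by (simp add: algebra_simps)
    qed
    define k where "k = (\<lambda>t. \<phi> (z + complex_of_real h + \<i> * complex_of_real t) - \<phi> (z + \<i> * complex_of_real t))"
    have kder: "DERIV k t :> b (z + complex_of_real h + \<i> * complex_of_real t) - b (z + \<i> * complex_of_real t)"
      if "0 \<le> t" "t \<le> h" for t
    proof -
      have n1: "norm (complex_of_real h + \<i> * complex_of_real t) < d"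
      proof -
        have "norm (complex_of_real h + \<i> * complex_of_real t) \<le> h + t"
          using norm_triangle_ineq[of "complex_of_real h" "\<i> * complex_of_real t"] that h0 by (simp add: norm_mult)
        then show ?thesis using that hd by linarith
      qed
      have n2: "norm (\<i> * complex_of_real t) < d" using that hd h0 by (simp add: norm_mult)
      have 1: "\<phi> differentiable (at (z + complex_of_real h + \<i> * complex_of_real t))"
        using dphi small[OF n1] by (simp add: add.assoc)
      have 2: "\<phi> differentiable (at (z + \<i> * complex_of_real t))"
        using dphi small[OF n2] by simp
      have "(k has_vector_derivative b (z + complex_of_real h + \<i> * complex_of_real t) - b (z + \<i> * complex_of_real t)) (at t)"
        unfolding k_def b_def
        by (intro has_vector_derivative_diff dd_line 1 2)
      then show ?thesis by (simp add: has_real_derivative_iff_has_vector_derivative)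
    qed
    obtain \<sigma> where sig: "0 < \<sigma>" "\<sigma> < h" "k h - k 0 = (h - 0) * (b (z + complex_of_real h + \<i> * complex_of_real \<sigma>) - b (z + \<i> * complex_of_real \<sigma>))"
      using MVT2[OF h0, of k "\<lambda>t. b (z + complex_of_real h + \<i> * complex_of_real t) - b (z + \<i> * complex_of_real t)"] kder by auto
    have kD: "k h - k 0 = \<Delta>" unfolding k_def \<Delta>_def by (simp add: algebra_simps)
    have boundB: "\<bar>(b (z + (complex_of_real h + \<i> * complex_of_real \<sigma>)) - b (z + \<i> * complex_of_real \<sigma>)) - B' (complex_of_real h)\<bar> \<le> e * (3 * h)"
    proof -
      have n1: "norm (complex_of_real h + \<i> * complex_of_real \<sigma>) \<le> 2 * h"
        using norm_triangle_ineq[of "complex_of_real h" "\<i> * complex_of_real \<sigma>"] sig h0 by (simp add: norm_mult)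
      have n2: "norm (\<i> * complex_of_real \<sigma>) \<le> h" using sig by (simp add: norm_mult)
      have "\<bar>(b (z + (complex_of_real h + \<i> * complex_of_real \<sigma>)) - b (z + \<i> * complex_of_real \<sigma>)) - B' ((complex_of_real h + \<i> * complex_of_real \<sigma>) - \<i> * complex_of_real \<sigma>)\<bar>
            \<le> e * (norm (complex_of_real h + \<i> * complex_of_real \<sigma>) + norm (\<i> * complex_of_real \<sigma>))"
        by (rule approx_bound[OF dB lb]) (use n1 n2 hd h0 in auto)
      also have "\<dots> \<le> e * (3 * h)" using n1 n2 e0 by (intro mult_left_mono) auto
      finally show ?thesis by simp
    qed
    have EB: "\<bar>\<Delta> - h * h * B' 1\<bar> \<le> 3 * e * h * h"
    proof -
      have "\<Delta> - h * h * B' 1 = h * ((b (z + (complex_of_real h + \<i> * complex_of_real \<sigma>)) - b (z + \<i> * complex_of_real \<sigma>)) - B' (complex_of_real h))"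
        using sig(3) kD Bscale by (simp add: algebra_simps add.assoc)
      then have "\<bar>\<Delta> - h * h * B' 1\<bar> = h * \<bar>(b (z + (complex_of_real h + \<i> * complex_of_real \<sigma>)) - b (z + \<i> * complex_of_real \<sigma>)) - B' (complex_of_real h)\<bar>"
        using h0 by (simp add: abs_mult)
      also have "\<dots> \<le> h * (e * (3 * h))" using boundB h0 by (intro mult_left_mono) auto
      finally show ?thesis by (simp add: algebra_simps)
    qed
    have "\<bar>h * h * (A' \<i> - B' 1)\<bar> \<le> 6 * e * h * h"
      using EA EB by (simp add: algebra_simps abs_if split: if_splits; linarith)
    moreover have "\<bar>h * h * (A' \<i> - B' 1)\<bar> = (h * h) * \<bar>A' \<i> - B' 1\<bar>"
      using h0 by (simp add: abs_mult)
    moreover have "6 * e * h * h = (h * h) * (6 * e)" by simp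
    ultimately have "(h * h) * \<bar>A' \<i> - B' 1\<bar> \<le> (h * h) * (6 * e)" by linarith
    moreover have "h * h > 0" using h0 by simp
    ultimately have "\<bar>A' \<i> - B' 1\<bar> \<le> 6 * e" using mult_le_cancel_left_pos by blast
    then show False using e0 unfolding e_def by simp
  qed
qed


lemma has_derivative_lip:
  assumes A: "(A has_derivative A') (at z)" and B: "(B has_derivative B') (at z)"
  shows "((\<lambda>w. lip (A w) (B w)) has_derivative (\<lambda>h. lip (A' h) (B z) + lip (A z) (B' h))) (at z)"
proof -
  have a: "((\<lambda>w. A w $ i) has_derivative (\<lambda>h. A' h $ i)) (at z)" for i
    using bounded_linear.has_derivative[OF bounded_linear_vec_nth A] .
  have b: "((\<lambda>w. B w $ i) has_derivative (\<lambda>h. B' h $ i)) (at z)" for i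
    using bounded_linear.has_derivative[OF bounded_linear_vec_nth B] .
  have m: "((\<lambda>w. A w $ i * B w $ i) has_derivative (\<lambda>h. A z $ i * B' h $ i + A' h $ i * B z $ i)) (at z)" for i
    using has_derivative_mult[OF a b] .
  have "((\<lambda>w. A w $ 0 * B w $ 0 + A w $ 1 * B w $ 1 + A w $ 2 * B w $ 2 + A w $ 3 * B w $ 3 - A w $ 4 * B w $ 4)
     has_derivative (\<lambda>h. (A z $ 0 * B' h $ 0 + A' h $ 0 * B z $ 0) + (A z $ 1 * B' h $ 1 + A' h $ 1 * B z $ 1)
       + (A z $ 2 * B' h $ 2 + A' h $ 2 * B z $ 2) + (A z $ 3 * B' h $ 3 + A' h $ 3 * B z $ 3)
       - (A z $ 4 * B' h $ 4 + A' h $ 4 * B z $ 4))) (at z)"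
    by (intro has_derivative_add has_derivative_diff m)
  then show ?thesis
    unfolding lip_def by (rule has_derivative_eq_rhs) (simp add: fun_eq_iff algebra_simps)
qed

lemma has_derivative_scal:
  fixes a :: "complex \<Rightarrow> complex" and G :: "complex \<Rightarrow> complex^'n"
  assumes A: "(a has_derivative A') (at z)" and B: "(G has_derivative G') (at z)"
  shows "((\<lambda>w. a w *s G w) has_derivative (\<lambda>h. A' h *s G z + a z *s G' h)) (at z)"
proof -
  have b: "((\<lambda>w. G w $ i) has_derivative (\<lambda>h. G' h $ i)) (at z)" for i
    using bounded_linear.has_derivative[OF bounded_linear_vec_nth B] .
  have "((\<lambda>w. (a w *s G w) $ i) has_derivative (\<lambda>h. a z * G' h $ i + A' h * G z $ i)) (at z)" for i
    using has_derivative_mult[OF A b] by simp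
  from has_derivative_vec[OF this] show ?thesis
    by (rule has_derivative_eq_rhs) (simp add: fun_eq_iff vec_eq_iff algebra_simps)
qed

lemma dd_lip:
  assumes "A differentiable (at z)" "B differentiable (at z)"
  shows "dd v (\<lambda>w. lip (A w) (B w)) z = lip (dd v A z) (B z) + lip (A z) (dd v B z)"
    and "(\<lambda>w. lip (A w) (B w)) differentiable (at z)"
proof -
  obtain A' B' where A: "(A has_derivative A') (at z)" and B: "(B has_derivative B') (at z)"
    using assms unfolding differentiable_def by blast
  show "dd v (\<lambda>w. lip (A w) (B w)) z = lip (dd v A z) (B z) + lip (A z) (dd v B z)"
    using dd_has[OF has_derivative_lip[OF A B]] dd_has[OF A] dd_has[OF B] by simp
  show "(\<lambda>w. lip (A w) (B w)) differentiable (at z)"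
    using has_derivative_lip[OF A B] unfolding differentiable_def by blast
qed

lemma dd_scal:
  fixes a :: "complex \<Rightarrow> complex" and G :: "complex \<Rightarrow> complex^'n"
  assumes "a differentiable (at z)" "G differentiable (at z)"
  shows "dd v (\<lambda>w. a w *s G w) z = dd v a z *s G z + a z *s dd v G z"
    and "(\<lambda>w. a w *s G w) differentiable (at z)"
proof -
  obtain A' G' where A: "(a has_derivative A') (at z)" and B: "(G has_derivative G') (at z)"
    using assms unfolding differentiable_def by blast
  show "dd v (\<lambda>w. a w *s G w) z = dd v a z *s G z + a z *s dd v G z"
    using dd_has[OF has_derivative_scal[OF A B]] dd_has[OF A] dd_has[OF B] by simp
  show "(\<lambda>w. a w *s G w) differentiable (at z)"
    using has_derivative_scal[OF A B] unfolding differentiable_def by blast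
qed

lemma dd_mult:
  fixes a b :: "complex \<Rightarrow> complex"
  assumes "a differentiable (at z)" "b differentiable (at z)"
  shows "dd v (\<lambda>w. a w * b w) z = dd v a z * b z + a z * dd v b z"
proof -
  obtain A' B' where A: "(a has_derivative A') (at z)" and B: "(b has_derivative B') (at z)"
    using assms unfolding differentiable_def by blast
  show ?thesis
    using dd_has[OF has_derivative_mult[OF A B]] dd_has[OF A] dd_has[OF B] by (simp add: algebra_simps)
qed

lemma bounded_linear_smult: "bounded_linear (\<lambda>x::complex^'n. c *s x)"
proof -
  have "linear (\<lambda>x::complex^'n. c *s x)"
    by (auto simp: linear_iff vec_eq_iff algebra_simps scaleR_conv_of_real)
  then show ?thesis using linear_conv_bounded_linear by blast
qed

lemma dd_lin2:
  fixes G H :: "complex \<Rightarrow> complex^'n"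
  assumes "G differentiable (at z)" "H differentiable (at z)"
  shows "dd v (\<lambda>w. a *s G w + b *s H w) z = a *s dd v G z + b *s dd v H z"
proof -
  have 1: "(\<lambda>w. a *s G w) differentiable (at z)" "(\<lambda>w. b *s H w) differentiable (at z)"
    using diff_linear[OF bounded_linear_smult] assms by auto
  show ?thesis using dd_add[OF 1] dd_linear[OF bounded_linear_smult assms(1)] dd_linear[OF bounded_linear_smult assms(2)]
    by simp
qed

lemma dd_comm_linear:
  assumes U: "open U" and L: "bounded_linear L" and F: "smooth_on U F" and z: "z \<in> U"
    and v: "v = 1 \<or> v = \<i>"
  shows "dd u (dd v (\<lambda>x. L (F x))) z = L (dd u (dd v F) z)"
proof -
  have "dd v (\<lambda>x. L (F x)) w = L (dd v F w)" if "w \<in> U" for w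
    using dd_linear[OF L smooth_diff[OF U F that]] .
  then have "dd u (dd v (\<lambda>x. L (F x))) z = dd u (\<lambda>w. L (dd v F w)) z"
    by (rule dd_cong[OF U z])
  also have "\<dots> = L (dd u (dd v F) z)"
    using dd_linear[OF L smooth_diff[OF U smooth_dd[OF F v] z]] .
  finally show ?thesis .
qed

lemma schwarz_cplx:
  fixes F :: "complex \<Rightarrow> complex"
  assumes U: "open U" and s: "smooth_on U F" and z: "z \<in> U"
  shows "dd \<i> (dd 1 F) z = dd 1 (dd \<i> F) z"
proof -
  have sr: "smooth_on U (\<lambda>x. Re (F x))" using smooth_linear[OF U bounded_linear_Re s] .
  have si: "smooth_on U (\<lambda>x. Im (F x))" using smooth_linear[OF U bounded_linear_Im s] .
  have "Re (dd \<i> (dd 1 F) z) = Re (dd 1 (dd \<i> F) z)"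
    using schwarz_real[OF U sr z] dd_comm_linear[OF U bounded_linear_Re s z, of \<i> 1]
      dd_comm_linear[OF U bounded_linear_Re s z, of 1 \<i>] by simp
  moreover have "Im (dd \<i> (dd 1 F) z) = Im (dd 1 (dd \<i> F) z)"
    using schwarz_real[OF U si z] dd_comm_linear[OF U bounded_linear_Im s z, of \<i> 1]
      dd_comm_linear[OF U bounded_linear_Im s z, of 1 \<i>] by simp
  ultimately show ?thesis by (simp add: complex_eq_iff)
qed

lemma schwarz_vec:
  fixes F :: "complex \<Rightarrow> complex^'n"
  assumes U: "open U" and s: "smooth_on U F" and z: "z \<in> U"
  shows "dd \<i> (dd 1 F) z = dd 1 (dd \<i> F) z"
proof -
  have "dd \<i> (dd 1 F) z $ i = dd 1 (dd \<i> F) z $ i" for i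
    using schwarz_cplx[OF U smooth_nth[OF U s] z, of i]
      dd_comm_linear[OF U bounded_linear_vec_nth s z, of 1 \<i> i]
      dd_comm_linear[OF U bounded_linear_vec_nth s z, of \<i> 1 i] by simp
  then show ?thesis by (simp add: vec_eq_iff)
qed

lemma Dz_dd: "Dz F z = (1/2) *s (dd 1 F z - \<i> *s dd \<i> F z)"
  and Dzb_dd: "Dzb F z = (1/2) *s (dd 1 F z + \<i> *s dd \<i> F z)"
  and dzc_dd: "dzc f z = (dd 1 f z - \<i> * dd \<i> f z) / 2"
  and dzbc_dd: "dzbc f z = (dd 1 f z + \<i> * dd \<i> f z) / 2"
  by (simp_all add: Dz_def Dzb_def dzc_def dzbc_def dx_dd dy_dd)

lemma smooth_Dz:
  assumes U: "open U" and s: "smooth_on U F"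
  shows "smooth_on U (Dz F)" "smooth_on U (Dzb F)"
proof -
  have a: "smooth_on U (dd 1 F)" "smooth_on U (dd \<i> F)" using smooth_dd[OF s] by auto
  have "smooth_on U (\<lambda>z. (1/2) *s (dd 1 F z - \<i> *s dd \<i> F z))"
    by (intro smooth_linear[OF U bounded_linear_smult] smooth_sub[OF U] a
        smooth_linear[OF U bounded_linear_smult, of "dd \<i> F"])
  then show "smooth_on U (Dz F)" unfolding Dz_dd[abs_def] by simp
  have "smooth_on U (\<lambda>z. (1/2) *s (dd 1 F z + \<i> *s dd \<i> F z))"
    by (intro smooth_linear[OF U bounded_linear_smult] smooth_add[OF U] a
        smooth_linear[OF U bounded_linear_smult, of "dd \<i> F"])
  then show "smooth_on U (Dzb F)" unfolding Dzb_dd[abs_def] by simp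
qed

lemma Dz_Dzb_comm:
  fixes F :: "complex \<Rightarrow> complex^5"
  assumes U: "open U" and s: "smooth_on U F" and z: "z \<in> U"
  shows "Dzb (Dz F) z = Dz (Dzb F) z"
proof -
  have d1: "dd 1 F differentiable (at z)" "dd \<i> F differentiable (at z)"
    using smooth_diff[OF U smooth_dd[OF s] z] by auto
  have e1: "Dz F = (\<lambda>w. (1/2) *s dd 1 F w + (- \<i>/2) *s dd \<i> F w)"
    by (auto simp: fun_eq_iff Dz_dd vec_eq_iff algebra_simps)
  have e2: "Dzb F = (\<lambda>w. (1/2) *s dd 1 F w + (\<i>/2) *s dd \<i> F w)"
    by (auto simp: fun_eq_iff Dzb_dd vec_eq_iff algebra_simps)
  have S: "dd \<i> (dd 1 F) z = dd 1 (dd \<i> F) z" using schwarz_vec[OF U s z] .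
  have L: "Dzb (Dz F) z = (1/2) *s (((1/2) *s dd 1 (dd 1 F) z + (- \<i>/2) *s dd 1 (dd \<i> F) z)
       + \<i> *s ((1/2) *s dd \<i> (dd 1 F) z + (- \<i>/2) *s dd \<i> (dd \<i> F) z))"
    by (simp only: Dzb_dd e1 dd_lin2[OF d1])
  have R: "Dz (Dzb F) z = (1/2) *s (((1/2) *s dd 1 (dd 1 F) z + (\<i>/2) *s dd 1 (dd \<i> F) z)
       - \<i> *s ((1/2) *s dd \<i> (dd 1 F) z + (\<i>/2) *s dd \<i> (dd \<i> F) z))"
    by (simp only: Dz_dd e2 dd_lin2[OF d1])
  show ?thesis unfolding L R S
    by (simp add: vec_eq_iff field_simps)
qed


definition vcnj :: "complex^5 \<Rightarrow> complex^5" where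
  "vcnj v = (\<chi> i. cnj (v $ i))"

lemma vcnj_nth[simp]: "vcnj v $ i = cnj (v $ i)" by (simp add: vcnj_def)
lemma vcnj_vcnj[simp]: "vcnj (vcnj v) = v" by (simp add: vec_eq_iff)
lemma vcnj_add[simp]: "vcnj (x + y) = vcnj x + vcnj y" by (simp add: vec_eq_iff)
lemma vcnj_diff[simp]: "vcnj (x - y) = vcnj x - vcnj y" by (simp add: vec_eq_iff)
lemma vcnj_smult[simp]: "vcnj (a *s x) = cnj a *s vcnj x" by (simp add: vec_eq_iff)
lemma vcnj_zero[simp]: "vcnj 0 = 0" by (simp add: vec_eq_iff)
lemma lip_vcnj: "lip (vcnj x) (vcnj y) = cnj (lip x y)" by (simp add: lip_def)
lemma realv_iff: "realv v \<longleftrightarrow> vcnj v = v"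
  by (auto simp: realv_def vec_eq_iff complex_eq_iff)

lemma bounded_linear_vcnj: "bounded_linear vcnj"
proof -
  have "linear vcnj" by (auto simp: linear_iff vec_eq_iff)
  then show ?thesis using linear_conv_bounded_linear by blast
qed

lemma dd_vcnj:
  assumes "F differentiable (at z)"
  shows "dd v (\<lambda>w. vcnj (F w)) z = vcnj (dd v F z)"
  using dd_linear[OF bounded_linear_vcnj assms] .

lemma dd_real:
  assumes U: "open U" and z: "z \<in> U" and r: "\<forall>w\<in>U. realv (F w)" and d: "F differentiable (at z)"
  shows "realv (dd v F z)"
proof -
  have "dd v F z = dd v (\<lambda>w. vcnj (F w)) z"
    by (rule dd_cong[OF U z]) (use r realv_iff in auto)
  then show ?thesis using dd_vcnj[OF d] realv_iff by simp
qed

lemma Dzb_vcnj: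
  assumes d: "F differentiable (at z)"
  shows "Dzb (\<lambda>w. vcnj (F w)) z = vcnj (Dz F z)" and "Dz (\<lambda>w. vcnj (F w)) z = vcnj (Dzb F z)"
  unfolding Dz_dd Dzb_dd dd_vcnj[OF d] by (simp_all add: vec_eq_iff)

lemma Dzb_real:
  assumes U: "open U" and z: "z \<in> U" and r: "\<forall>w\<in>U. realv (F w)" and d: "F differentiable (at z)"
  shows "Dzb F z = vcnj (Dz F z)"
proof -
  have e: "\<And>w. w \<in> U \<Longrightarrow> F w = vcnj (F w)" using r realv_iff by auto
  have "dd v F z = dd v (\<lambda>w. vcnj (F w)) z" for v by (rule dd_cong[OF U z e])
  then have "Dzb F z = Dzb (\<lambda>w. vcnj (F w)) z"
    unfolding Dzb_dd by simp
  then show ?thesis using Dzb_vcnj[OF d] by simp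
qed

lemma dzbc_cnj:
  fixes g :: "complex \<Rightarrow> complex"
  assumes d: "g differentiable (at z)"
  shows "dzbc (\<lambda>w. cnj (g w)) z = cnj (dzc g z)"
  unfolding dzc_dd dzbc_dd dd_linear[OF bounded_linear_cnj d] by simp

lemma sum_5: "(\<Sum>i\<in>(UNIV::5 set). f i) = f 0 + f 1 + f 2 + f 3 + f 4"
  unfolding UNIV_5 using distinct_5 by (simp add: algebra_simps)

lemma frame5:
  fixes e0 e1 e2 e3 e4 v :: "complex^5"
  assumes ind: "\<And>c0 c1 c2 c3 c4. c0 *s e0 + c1 *s e1 + c2 *s e2 + c3 *s e3 + c4 *s e4 = 0 \<Longrightarrow>
      c0 = 0 \<and> c1 = 0 \<and> c2 = 0 \<and> c3 = 0 \<and> c4 = 0"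
  shows "\<exists>c0 c1 c2 c3 c4. v = c0 *s e0 + c1 *s e1 + c2 *s e2 + c3 *s e3 + c4 *s e4"
proof -
  define M :: "complex^5^5" where "M = (\<chi> j i. if i = 0 then e0 $ j else if i = 1 then e1 $ j
      else if i = 2 then e2 $ j else if i = 3 then e3 $ j else e4 $ j)"
  have Mv: "M *v c = c $ 0 *s e0 + c $ 1 *s e1 + c $ 2 *s e2 + c $ 3 *s e3 + c $ 4 *s e4" for c
  proof -
    have "(M *v c) $ j = (c $ 0 *s e0 + c $ 1 *s e1 + c $ 2 *s e2 + c $ 3 *s e3 + c $ 4 *s e4) $ j" for j
      unfolding matrix_vector_mult_def sum_5 M_def using distinct_5 by (simp add: mult.commute)
    then show ?thesis by (simp add: vec_eq_iff)
  qed
  have "inj ((*v) M)"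
  proof (rule injI)
    fix c d assume "M *v c = M *v d"
    then have "(c $ 0 - d $ 0) *s e0 + (c $ 1 - d $ 1) *s e1 + (c $ 2 - d $ 2) *s e2 + (c $ 3 - d $ 3) *s e3 + (c $ 4 - d $ 4) *s e4 = 0"
      unfolding Mv by (simp add: vec_eq_iff algebra_simps)
    from ind[OF this] show "c = d" by (simp add: vec_eq_iff forall_5)
  qed
  then have "surj ((*v) M)" by (intro vec.linear_inj_imp_surj) auto
  then obtain c where "v = M *v c" by blast
  then show ?thesis unfolding Mv by blast
qed


lemma lip_add_left[simp]: "lip (x + y) z = lip x z + lip y z"
  and lip_add_right[simp]: "lip z (x + y) = lip z x + lip z y"
  and lip_diff_left[simp]: "lip (x - y) z = lip x z - lip y z"
  and lip_diff_right[simp]: "lip z (x - y) = lip z x - lip z y"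
  and lip_smult_left[simp]: "lip (a *s x) z = a * lip x z"
  and lip_smult_right[simp]: "lip z (a *s x) = a * lip z x"
  and lip_zero_left[simp]: "lip 0 z = 0"
  and lip_zero_right[simp]: "lip z 0 = 0"
  and lip_minus_left[simp]: "lip (- x) z = - lip x z"
  and lip_minus_right[simp]: "lip z (- x) = - lip z x"
  by (simp_all add: lip_def algebra_simps)

lemma lip_sym: "lip x y = lip y x"
  by (simp add: lip_def algebra_simps)

lemma dzc_lip:
  assumes "A differentiable (at z)" "B differentiable (at z)"
  shows "dzc (\<lambda>w. lip (A w) (B w)) z = lip (Dz A z) (B z) + lip (A z) (Dz B z)"
    and "dzbc (\<lambda>w. lip (A w) (B w)) z = lip (Dzb A z) (B z) + lip (A z) (Dzb B z)"
  unfolding dzc_dd dzbc_dd Dz_dd Dzb_dd dd_lip[OF assms]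
  by (simp_all add: algebra_simps add_divide_distrib diff_divide_distrib)

lemma dzc_const:
  assumes "open U" "z \<in> U" "\<And>w. w \<in> U \<Longrightarrow> g w = c"
  shows "dzc g z = 0" "dzbc g z = 0"
proof -
  have "dd v g z = dd v (\<lambda>_. c) z" for v by (rule dd_cong[OF assms])
  moreover have "dd v (\<lambda>_. c) z = 0" for v using dd_has[of "\<lambda>_. c" "\<lambda>_. 0" z v] by simp
  ultimately show "dzc g z = 0" "dzbc g z = 0" unfolding dzc_dd dzbc_dd by simp_all
qed

lemma lip_const:
  assumes U: "open U" and z: "z \<in> U" and "A differentiable (at z)" "B differentiable (at z)"
    and c: "\<And>w. w \<in> U \<Longrightarrow> lip (A w) (B w) = c"
  shows "lip (Dz A z) (B z) + lip (A z) (Dz B z) = 0"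
    and "lip (Dzb A z) (B z) + lip (A z) (Dzb B z) = 0"
  using dzc_lip[OF assms(3,4)] dzc_const[OF U z c] by simp_all

lemma Dz_cong:
  assumes "open U" "z \<in> U" "\<And>w. w \<in> U \<Longrightarrow> F w = G w"
  shows "Dz F z = Dz G z" "Dzb F z = Dzb G z"
proof -
  have "dd v F z = dd v G z" for v by (rule dd_cong[OF assms])
  then show "Dz F z = Dz G z" "Dzb F z = Dzb G z" unfolding Dz_dd Dzb_dd by simp_all
qed

lemma dzc_cong:
  assumes "open U" "z \<in> U" "\<And>w. w \<in> U \<Longrightarrow> F w = G w"
  shows "dzc F z = dzc G z" "dzbc F z = dzbc G z"
proof -
  have "dd v F z = dd v G z" for v by (rule dd_cong[OF assms])
  then show "dzc F z = dzc G z" "dzbc F z = dzbc G z" unfolding dzc_dd dzbc_dd by simp_all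
qed

lemma Dz_add:
  assumes "F differentiable (at z)" "G differentiable (at z)"
  shows "Dz (\<lambda>w. F w + G w) z = Dz F z + Dz G z" "Dzb (\<lambda>w. F w + G w) z = Dzb F z + Dzb G z"
  unfolding Dz_dd Dzb_dd dd_add[OF assms] by (simp_all add: vec_eq_iff algebra_simps)

lemma Dz_scal:
  fixes a :: "complex \<Rightarrow> complex"
  assumes "a differentiable (at z)" "G differentiable (at z)"
  shows "Dz (\<lambda>w. a w *s G w) z = dzc a z *s G z + a z *s Dz G z"
    "Dzb (\<lambda>w. a w *s G w) z = dzbc a z *s G z + a z *s Dzb G z"
  unfolding Dz_dd Dzb_dd dzc_dd dzbc_dd dd_scal[OF assms]
  by (simp_all add: vec_eq_iff algebra_simps add_divide_distrib diff_divide_distrib)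

lemma dzc_mult:
  fixes a b :: "complex \<Rightarrow> complex"
  assumes "a differentiable (at z)" "b differentiable (at z)"
  shows "dzc (\<lambda>w. a w * b w) z = dzc a z * b z + a z * dzc b z"
    "dzbc (\<lambda>w. a w * b w) z = dzbc a z * b z + a z * dzbc b z"
  unfolding dzc_dd dzbc_dd dd_mult[OF assms]
  by (simp_all add: algebra_simps add_divide_distrib diff_divide_distrib)

lemma dzc_exp:
  fixes g :: "complex \<Rightarrow> complex"
  assumes "g differentiable (at z)"
  shows "dzbc (\<lambda>w. exp (g w)) z = exp (g z) * dzbc g z"
proof -
  obtain G' where A': "(g has_derivative G') (at z)" using assms unfolding differentiable_def by blast
  have E: "(exp has_derivative (\<lambda>h. exp (g z) * h)) (at (g z))"
    using DERIV_exp[of "g z"] by (simp add: has_field_derivative_def)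
  have P: "((\<lambda>w. exp (g w)) has_derivative (\<lambda>h. exp (g z) * G' h)) (at z)"
    using has_derivative_compose[OF A' E] by (simp add: o_def)
  show ?thesis unfolding dzbc_dd dd_has[OF P] dd_has[OF A'] by (simp add: algebra_simps)
qed

lemma dzbc_real:
  fixes g :: "complex \<Rightarrow> complex"
  assumes U: "open U" and z: "z \<in> U" and r: "\<And>w. w \<in> U \<Longrightarrow> cnj (g w) = g w"
    and d: "g differentiable (at z)"
  shows "dzbc g z = cnj (dzc g z)"
proof -
  have "dzbc g z = dzbc (\<lambda>w. cnj (g w)) z" using dzc_cong(2)[OF U z, of g "\<lambda>w. cnj (g w)"] r by metis
  then show ?thesis using dzbc_cnj[OF d] by simp
qed

lemma diff_Dz:
  assumes U: "open U" and s: "smooth_on U F" and z: "z \<in> U"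
  shows "Dz F differentiable (at z)" "Dzb F differentiable (at z)"
  using smooth_diff[OF U smooth_Dz(1)[OF U s] z] smooth_diff[OF U smooth_Dz(2)[OF U s] z] by auto


lemma realv_nth: "realv a \<Longrightarrow> a $ i = complex_of_real (Re (a $ i))"
  by (simp add: realv_def complex_eq_iff)

lemma lip_e4: "lip v e4 = - v $ 4"
  unfolding lip_def e4_def using distinct_5 by (simp add: axis_def)

lemma future_null:
  assumes ra: "realv a" and rb: "realv b" and aa: "lip a a = 1" and bb: "lip b b = -1"
    and ab: "lip a b = 0" and fb: "future b"
  shows "future (a + b)"
proof -
  define x where "x i = Re (a $ i)" for i
  define y where "y i = Re (b $ i)" for i
  have ax: "a $ i = complex_of_real (x i)" for i using realv_nth[OF ra] x_def by simp
  have by': "b $ i = complex_of_real (y i)" for i using realv_nth[OF rb] y_def by simp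
  have e1: "x 0 * x 0 + x 1 * x 1 + x 2 * x 2 + x 3 * x 3 - x 4 * x 4 = 1"
    using aa unfolding lip_def ax by (simp flip: of_real_mult of_real_add of_real_diff)
  have e2: "y 0 * y 0 + y 1 * y 1 + y 2 * y 2 + y 3 * y 3 - y 4 * y 4 = -1"
  proof -
    have "complex_of_real (y 0 * y 0 + y 1 * y 1 + y 2 * y 2 + y 3 * y 3 - y 4 * y 4) = complex_of_real (-1)"
      using bb unfolding lip_def by' by (simp flip: of_real_mult of_real_add of_real_diff)
    then show ?thesis using of_real_eq_iff by blast
  qed
  have e3: "x 0 * y 0 + x 1 * y 1 + x 2 * y 2 + x 3 * y 3 - x 4 * y 4 = 0"
    using ab unfolding lip_def ax by' by (simp flip: of_real_mult of_real_add of_real_diff)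
  have y4: "y 4 > 0" using fb unfolding future_def lip_e4 by' by simp
  define X where "X = x 0 * x 0 + x 1 * x 1 + x 2 * x 2 + x 3 * x 3"
  define Yv where "Yv = y 0 * y 0 + y 1 * y 1 + y 2 * y 2 + y 3 * y 3"
  define S where "S = x 0 * y 0 + x 1 * y 1 + x 2 * y 2 + x 3 * y 3"
  have lag: "X * Yv - S * S = (x 0 * y 1 - x 1 * y 0)^2 + (x 0 * y 2 - x 2 * y 0)^2 + (x 0 * y 3 - x 3 * y 0)^2
      + (x 1 * y 2 - x 2 * y 1)^2 + (x 1 * y 3 - x 3 * y 1)^2 + (x 2 * y 3 - x 3 * y 2)^2"
    unfolding X_def Yv_def S_def by (simp add: algebra_simps power2_eq_square)
  have cs: "S * S \<le> X * Yv" using lag by (smt (verit) zero_le_power2)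
  have X1: "X = 1 + x 4 * x 4" using e1 X_def by simp
  have Y1: "Yv = y 4 * y 4 - 1" using e2 Yv_def by simp
  have S1: "S = x 4 * y 4" using e3 S_def by simp
  have "(x 4 * y 4) * (x 4 * y 4) \<le> (1 + x 4 * x 4) * (y 4 * y 4 - 1)" using cs X1 Y1 S1 by simp
  then have "x 4 * x 4 + 1 \<le> y 4 * y 4" by (simp add: algebra_simps)
  then have "\<bar>x 4\<bar>^2 < (y 4)^2" by (simp add: power2_eq_square)
  then have "\<bar>x 4\<bar> < y 4" using y4 by (simp add: power2_less_imp_less)
  then have "x 4 + y 4 > 0" by linarith
  then show ?thesis unfolding future_def lip_e4 using ax by' by simp
qed


locale surf =
  fixes U :: "complex set"
    and f N1 N2 :: "complex \<Rightarrow> complex^5"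
    and u :: "complex \<Rightarrow> real"
  assumes U_open: "open U"
    and f_smooth: "smooth_on U f" and u_smooth: "smooth_on U u"
    and N1_smooth: "smooth_on U N1" and N2_smooth: "smooth_on U N2"
    and f_sphere: "\<forall>z\<in>U. realv (f z) \<and> lip (f z) (f z) = 1"
    and f_conf: "\<forall>z\<in>U. lip (Dz f z) (Dz f z) = 0 \<and> lip (Dz f z) (Dzb f z) = exp (2 * complex_of_real (u z))"
    and N_real: "\<forall>z\<in>U. realv (N1 z) \<and> realv (N2 z)"
    and N_normal: "\<forall>z\<in>U. lip (N1 z) (f z) = 0 \<and> lip (N1 z) (Dz f z) = 0 \<and>
                          lip (N2 z) (f z) = 0 \<and> lip (N2 z) (Dz f z) = 0"
    and N_orthonormal: "\<forall>z\<in>U. lip (N1 z) (N1 z) = 1 \<and> lip (N2 z) (N2 z) = -1 \<and> lip (N1 z) (N2 z) = 0"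
    and N2_future: "\<forall>z\<in>U. future (N2 z)"
    and orientation: "\<exists>h :: complex \<Rightarrow> real. \<forall>z\<in>U. meanH f u z = complex_of_real (h z) *s (N1 z + N2 z)"
    and non_isotropic: "\<forall>z\<in>U. (xi1 f N1 z)\<^sup>2 - (xi2 f N2 z)\<^sup>2 \<noteq> 0"
begin

definition "ell w = N1 w + N2 w"
definition "mm w = N1 w - N2 w"
definition "xi w = lip (Dz (Dz f) w) (ell w)"
definition "EE w = exp (2 * complex_of_real (u w))"
definition "lam w = complex_of_real (exp (u w) / (sqrt 2 * cmod (xi w)))"
definition "Y0 w = lam w *s ell w"

lemma xi_eq: "xi1 f N1 w - xi2 f N2 w = xi w"
  unfolding xi_def xi1_def xi2_def ell_def by simp

lemma xi_nz: "z \<in> U \<Longrightarrow> xi z \<noteq> 0"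
proof
  assume z: "z \<in> U" and x: "xi z = 0"
  have "(xi1 f N1 z)\<^sup>2 - (xi2 f N2 z)\<^sup>2 = (xi1 f N1 z - xi2 f N2 z) * (xi1 f N1 z + xi2 f N2 z)"
    by (simp add: power2_eq_square algebra_simps)
  then show False using non_isotropic z x xi_eq by simp
qed

lemma EE_real: "EE w = complex_of_real (exp (2 * u w))"
  unfolding EE_def by (simp flip: exp_of_real)

lemma EE_nz: "EE w \<noteq> 0" unfolding EE_def by simp

lemma cnj_EE: "cnj (EE w) = EE w" unfolding EE_real by simp

lemma sm_f: "smooth_on U f" and sm_N1: "smooth_on U N1" and sm_N2: "smooth_on U N2"
  using f_smooth N1_smooth N2_smooth .

lemma sm_fz: "smooth_on U (Dz f)" "smooth_on U (Dzb f)" "smooth_on U (Dz (Dz f))"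
  "smooth_on U (Dzb (Dz f))"
  using smooth_Dz[OF U_open f_smooth] smooth_Dz[OF U_open smooth_Dz(1)[OF U_open f_smooth]] by auto

lemma sm_ell: "smooth_on U ell" "smooth_on U mm"
  unfolding ell_def[abs_def] mm_def[abs_def]
  using smooth_add[OF U_open N1_smooth N2_smooth] smooth_sub[OF U_open N1_smooth N2_smooth] by auto

lemma sm_xi: "smooth_on U xi"
  unfolding xi_def[abs_def] using smooth_lip[OF U_open sm_fz(3) sm_ell(1)] .

lemma sm_lam: "smooth_on U lam"
proof -
  have su: "smooth_on U (\<lambda>w. complex_of_real (u w))" using smooth_of_real[OF U_open u_smooth] .
  have a: "smooth_on U (\<lambda>w. exp (complex_of_real (u w)) * complex_of_real (1 / sqrt 2) * complex_of_real (1 / cmod (xi w)))"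
    by (intro smooth_mult[OF U_open] smooth_exp[OF U_open] su smooth_const[OF U_open]
        smooth_inv_cmod[OF U_open sm_xi]) (use xi_nz in auto)
  have e: "lam w = exp (complex_of_real (u w)) * complex_of_real (1 / sqrt 2) * complex_of_real (1 / cmod (xi w))" for w
    unfolding lam_def by (simp flip: exp_of_real)
  show ?thesis unfolding e[abs_def] using a .
qed

lemma sm_Y0: "smooth_on U Y0"
  unfolding Y0_def[abs_def] using smooth_scale[OF U_open sm_lam sm_ell(1)] .

lemmas sm_all = sm_f sm_N1 sm_N2 sm_fz sm_ell sm_xi sm_lam sm_Y0

lemma dif: assumes "z \<in> U"
  shows "f differentiable (at z)" "N1 differentiable (at z)" "N2 differentiable (at z)"
  "Dz f differentiable (at z)" "Dzb f differentiable (at z)" "Dz (Dz f) differentiable (at z)"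
  "Dzb (Dz f) differentiable (at z)" "ell differentiable (at z)" "mm differentiable (at z)"
  "xi differentiable (at z)" "lam differentiable (at z)" "Y0 differentiable (at z)"
  "Dz Y0 differentiable (at z)" "Dzb Y0 differentiable (at z)" "Dz ell differentiable (at z)"
  "Dzb ell differentiable (at z)"
  using smooth_diff[OF U_open _ assms] sm_all diff_Dz[OF U_open _ assms] by auto

end


context surf
begin

lemma realvs: assumes z: "z \<in> U"
  shows "realv (f z)" "realv (N1 z)" "realv (N2 z)" "realv (ell z)" "realv (mm z)"
  using f_sphere N_real z unfolding ell_def mm_def realv_iff by auto

lemma Q_eq: assumes z: "z \<in> U" shows "Dzb f z = vcnj (Dz f z)"
  using Dzb_real[OF U_open z _ dif(1)[OF z]] f_sphere by auto

lemma basic: assumes z: "z \<in> U"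
  shows "lip (f z) (f z) = 1" "lip (f z) (Dz f z) = 0" "lip (f z) (Dzb f z) = 0"
    "lip (Dz f z) (Dz f z) = 0" "lip (Dz f z) (Dzb f z) = EE z" "lip (Dzb f z) (Dzb f z) = 0"
    "lip (N1 z) (f z) = 0" "lip (N1 z) (Dz f z) = 0" "lip (N1 z) (Dzb f z) = 0"
    "lip (N2 z) (f z) = 0" "lip (N2 z) (Dz f z) = 0" "lip (N2 z) (Dzb f z) = 0"
    "lip (N1 z) (N1 z) = 1" "lip (N2 z) (N2 z) = -1" "lip (N1 z) (N2 z) = 0"
proof -
  show f1: "lip (f z) (f z) = 1" using f_sphere z by auto
  have "lip (Dz f z) (f z) + lip (f z) (Dz f z) = 0" "lip (Dzb f z) (f z) + lip (f z) (Dzb f z) = 0"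
    using lip_const[OF U_open z dif(1)[OF z] dif(1)[OF z], of 1] f_sphere by auto
  then show "lip (f z) (Dz f z) = 0" "lip (f z) (Dzb f z) = 0" by (simp_all add: lip_sym[of "f z"])
  show "lip (Dz f z) (Dz f z) = 0" "lip (Dz f z) (Dzb f z) = EE z" using f_conf z EE_def by auto
  show "lip (Dzb f z) (Dzb f z) = 0"
    unfolding Q_eq[OF z] lip_vcnj using f_conf z by simp
  show "lip (N1 z) (f z) = 0" "lip (N1 z) (Dz f z) = 0" "lip (N2 z) (f z) = 0" "lip (N2 z) (Dz f z) = 0"
    using N_normal z by auto
  have r1: "vcnj (N1 z) = N1 z" "vcnj (N2 z) = N2 z" using realvs[OF z] realv_iff by auto
  show "lip (N1 z) (Dzb f z) = 0"
    using lip_vcnj[of "N1 z" "Dz f z"] N_normal z r1 Q_eq[OF z] by simp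
  show "lip (N2 z) (Dzb f z) = 0"
    using lip_vcnj[of "N2 z" "Dz f z"] N_normal z r1 Q_eq[OF z] by simp
  show "lip (N1 z) (N1 z) = 1" "lip (N2 z) (N2 z) = -1" "lip (N1 z) (N2 z) = 0"
    using N_orthonormal z by auto
qed

lemma basic_sym: assumes z: "z \<in> U"
  shows "lip (Dz f z) (f z) = 0" "lip (Dzb f z) (f z) = 0" "lip (Dzb f z) (Dz f z) = EE z"
    "lip (f z) (N1 z) = 0" "lip (Dz f z) (N1 z) = 0" "lip (Dzb f z) (N1 z) = 0"
    "lip (f z) (N2 z) = 0" "lip (Dz f z) (N2 z) = 0" "lip (Dzb f z) (N2 z) = 0"
    "lip (N2 z) (N1 z) = 0"
  using basic[OF z] lip_sym by metis+

lemma parseval: assumes z: "z \<in> U"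
  shows "v = lip v (f z) *s f z + (lip v (Dzb f z) / EE z) *s Dz f z + (lip v (Dz f z) / EE z) *s Dzb f z
      + lip v (N1 z) *s N1 z - lip v (N2 z) *s N2 z"
proof -
  note B = basic[OF z] basic_sym[OF z]
  have E: "EE z \<noteq> 0" by (rule EE_nz)
  have ind: "c0 = 0 \<and> c1 = 0 \<and> c2 = 0 \<and> c3 = 0 \<and> c4 = 0"
    if h: "c0 *s f z + c1 *s Dz f z + c2 *s Dzb f z + c3 *s N1 z + c4 *s N2 z = 0" for c0 c1 c2 c3 c4
  proof -
    have "lip (c0 *s f z + c1 *s Dz f z + c2 *s Dzb f z + c3 *s N1 z + c4 *s N2 z) (f z) = 0"
      "lip (c0 *s f z + c1 *s Dz f z + c2 *s Dzb f z + c3 *s N1 z + c4 *s N2 z) (Dz f z) = 0"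
      "lip (c0 *s f z + c1 *s Dz f z + c2 *s Dzb f z + c3 *s N1 z + c4 *s N2 z) (Dzb f z) = 0"
      "lip (c0 *s f z + c1 *s Dz f z + c2 *s Dzb f z + c3 *s N1 z + c4 *s N2 z) (N1 z) = 0"
      "lip (c0 *s f z + c1 *s Dz f z + c2 *s Dzb f z + c3 *s N1 z + c4 *s N2 z) (N2 z) = 0"
      unfolding h by simp_all
    then show ?thesis using B E by simp
  qed
  obtain c0 c1 c2 c3 c4 where c: "v = c0 *s f z + c1 *s Dz f z + c2 *s Dzb f z + c3 *s N1 z + c4 *s N2 z"
    using frame5[OF ind] by blast
  have "lip v (f z) = c0" "lip v (Dzb f z) = c1 * EE z" "lip v (Dz f z) = c2 * EE z"
    "lip v (N1 z) = c3" "lip v (N2 z) = - c4"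
    unfolding c using B by simp_all
  then show ?thesis using E c by simp
qed

end


context surf
begin

definition "cc w = lip (Dz ell w) (N1 w)"

lemma ell_facts: assumes z: "z \<in> U"
  shows "lip (ell z) (ell z) = 0" "lip (ell z) (f z) = 0" "lip (ell z) (Dz f z) = 0"
    "lip (ell z) (Dzb f z) = 0" "lip (ell z) (N1 z) = 1" "lip (ell z) (N2 z) = -1"
    "lip (f z) (ell z) = 0" "lip (Dz f z) (ell z) = 0" "lip (Dzb f z) (ell z) = 0"
    "lip (N1 z) (ell z) = 1" "lip (N2 z) (ell z) = -1"
  using basic[OF z] basic_sym[OF z] unfolding ell_def by simp_all

lemma meanH_eq: assumes z: "z \<in> U"
  shows "Dzb (Dz f) z = EE z *s (meanH f u z - f z)"
  unfolding meanH_def EE_def[symmetric] using EE_nz[of z] by (simp add: vec_eq_iff)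

lemma L_facts: assumes z: "z \<in> U"
  shows "Dzb ell z = vcnj (Dz ell z)"
    "lip (Dz ell z) (f z) = 0" "lip (Dz ell z) (Dz f z) = - xi z" "lip (Dz ell z) (Dzb f z) = 0"
    "lip (Dz ell z) (ell z) = 0" "lip (Dz ell z) (N2 z) = - cc z"
    "lip (Dzb ell z) (Dz f z) = 0"
proof -
  note d = dif[OF z]
  have rl: "\<forall>w\<in>U. realv (ell w)" using realvs by auto
  show Lb: "Dzb ell z = vcnj (Dz ell z)" using Dzb_real[OF U_open z rl d(8)] .
  have "lip (Dz ell z) (f z) + lip (ell z) (Dz f z) = 0"
    using lip_const(1)[OF U_open z d(8) d(1) ell_facts(2)] .
  then show "lip (Dz ell z) (f z) = 0" using ell_facts[OF z] by simp
  have "lip (Dz ell z) (Dz f z) + lip (ell z) (Dz (Dz f) z) = 0"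
    using lip_const(1)[OF U_open z d(8) d(4) ell_facts(3)] .
  then show "lip (Dz ell z) (Dz f z) = - xi z" unfolding xi_def using lip_sym[of "ell z" "Dz (Dz f) z"] by (simp add: add_eq_0_iff)
  have "lip (Dzb ell z) (Dz f z) + lip (ell z) (Dzb (Dz f) z) = 0"
    using lip_const(2)[OF U_open z d(8) d(4) ell_facts(3)] .
  moreover have "lip (ell z) (Dzb (Dz f) z) = 0"
  proof -
    obtain h :: "complex \<Rightarrow> real" where h: "\<forall>z\<in>U. meanH f u z = complex_of_real (h z) *s (N1 z + N2 z)"
      using orientation by blast
    have "meanH f u z = complex_of_real (h z) *s ell z" using h z unfolding ell_def by simp
    then show ?thesis unfolding meanH_eq[OF z] using ell_facts[OF z] by simp
  qed
  ultimately show Lb0: "lip (Dzb ell z) (Dz f z) = 0" by simp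
  have "Dz ell z = vcnj (Dzb ell z)" using Lb by simp
  then have "lip (Dz ell z) (Dzb f z) = lip (vcnj (Dzb ell z)) (vcnj (Dz f z))" using Q_eq[OF z] by simp
  also have "\<dots> = cnj (lip (Dzb ell z) (Dz f z))" by (rule lip_vcnj)
  also have "\<dots> = 0" using Lb0 by simp
  finally show "lip (Dz ell z) (Dzb f z) = 0" .
  have "lip (Dz ell z) (ell z) + lip (ell z) (Dz ell z) = 0"
    using lip_const(1)[OF U_open z d(8) d(8) ell_facts(1)] .
  then show L0: "lip (Dz ell z) (ell z) = 0" using lip_sym[of "ell z" "Dz ell z"] by simp
  show "lip (Dz ell z) (N2 z) = - cc z"
  proof -
    have "lip (Dz ell z) (N1 z) + lip (Dz ell z) (N2 z) = 0" using L0 unfolding ell_def[of z] by simp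
    then show ?thesis unfolding cc_def by (simp add: eq_neg_iff_add_eq_0 add.commute)
  qed
qed

lemma L_exp: assumes z: "z \<in> U"
  shows "Dz ell z = (- xi z / EE z) *s Dzb f z + cc z *s ell z"
proof -
  have P': "Dz ell z = 0 *s f z + (0 / EE z) *s Dz f z + (- xi z / EE z) *s Dzb f z + cc z *s N1 z - (- cc z) *s N2 z"
    using parseval[OF z, of "Dz ell z"] unfolding L_facts(2,3,4,6)[OF z] cc_def[symmetric] .
  show ?thesis
    by (subst P') (simp add: ell_def vec_eq_iff algebra_simps)
qed

lemma Lb_exp: assumes z: "z \<in> U"
  shows "Dzb ell z = (- cnj (xi z) / EE z) *s Dz f z + cnj (cc z) *s ell z"
proof -
  have "vcnj (Dzb f z) = Dz f z" using Q_eq[OF z] by simp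
  moreover have "vcnj (ell z) = ell z" using realvs[OF z] realv_iff by simp
  ultimately show ?thesis unfolding L_facts(1)[OF z] L_exp[OF z] using cnj_EE[of z] by simp
qed

lemma fzz_P: assumes z: "z \<in> U" shows "lip (Dz (Dz f) z) (Dz f z) = 0"
proof -
  have "lip (Dz (Dz f) z) (Dz f z) + lip (Dz f z) (Dz (Dz f) z) = 0"
    using lip_const(1)[OF U_open z dif(4)[OF z] dif(4)[OF z], of 0] f_conf by auto
  then show ?thesis using lip_sym[of "Dz f z" "Dz (Dz f) z"] by simp
qed

end


context surf
begin

lemma lift_comp: assumes z: "z \<in> U" and d: "g differentiable (at z)"
    and r: "\<And>w. w \<in> U \<Longrightarrow> cnj (g w) = g w"
  shows "lip (Dz (\<lambda>w. g w *s ell w) z) (Dz (\<lambda>w. g w *s ell w) z) = 0"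
    "lip (Dz (\<lambda>w. g w *s ell w) z) (Dzb (\<lambda>w. g w *s ell w) z) = g z * g z * (xi z * cnj (xi z)) / EE z"
proof -
  note B = basic[OF z] basic_sym[OF z] ell_facts[OF z]
  have gb: "dzbc g z = cnj (dzc g z)" using dzbc_real[OF U_open z r d] .
  have D1: "Dz (\<lambda>w. g w *s ell w) z = dzc g z *s ell z + g z *s ((- xi z / EE z) *s Dzb f z + cc z *s ell z)"
    using Dz_scal(1)[OF d dif(8)[OF z]] L_exp[OF z] by simp
  have D2: "Dzb (\<lambda>w. g w *s ell w) z = dzbc g z *s ell z + g z *s ((- cnj (xi z) / EE z) *s Dz f z + cnj (cc z) *s ell z)"
    using Dz_scal(2)[OF d dif(8)[OF z]] Lb_exp[OF z] by simp
  show "lip (Dz (\<lambda>w. g w *s ell w) z) (Dz (\<lambda>w. g w *s ell w) z) = 0"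
    unfolding D1 using B by simp
  have E: "EE z \<noteq> 0" by (rule EE_nz)
  show "lip (Dz (\<lambda>w. g w *s ell w) z) (Dzb (\<lambda>w. g w *s ell w) z) = g z * g z * (xi z * cnj (xi z)) / EE z"
    unfolding D1 D2 using B E by (simp add: field_simps)
qed

lemma lam_real: "cnj (lam w) = lam w" unfolding lam_def by simp

lemma lam_pos: "z \<in> U \<Longrightarrow> Re (lam z) > 0"
  unfolding lam_def using xi_nz by simp

lemma lam_sq: assumes z: "z \<in> U"
  shows "lam z * lam z * (xi z * cnj (xi z)) / EE z = 1/2"
proof -
  have x: "cmod (xi z) > 0" using xi_nz[OF z] by simp
  have "xi z * cnj (xi z) = complex_of_real ((cmod (xi z))^2)" by (simp add: complex_mult_cnj cmod_power2)
  moreover have "EE z = complex_of_real (exp (u z) * exp (u z))" unfolding EE_real by (simp flip: exp_add)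
  moreover have "(exp (u z) / (sqrt 2 * cmod (xi z))) * (exp (u z) / (sqrt 2 * cmod (xi z))) * (cmod (xi z))^2
       / (exp (u z) * exp (u z)) = 1/2"
    using x by (simp add: field_simps power2_eq_square)
  ultimately show ?thesis unfolding lam_def
    by (metis (no_types, lifting) of_real_1 of_real_divide of_real_mult of_real_numeral)
qed

lemma Y0_fun: "Y0 = (\<lambda>w. lam w *s ell w)" unfolding Y0_def[abs_def] ..

lemma ell_future: "z \<in> U \<Longrightarrow> future (ell z)"
  unfolding ell_def using future_null realvs N_orthonormal N2_future by auto

lemma future_scale: "future v \<Longrightarrow> r > 0 \<Longrightarrow> future (complex_of_real r *s v)"
  unfolding future_def by (simp add: mult_pos_neg)

lemma Y0_lift: assumes z: "z \<in> U"
  shows "realv (Y0 z)" "\<exists>c::real. Y0 z = complex_of_real c *s (N1 z + N2 z)"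
    "lip (Y0 z) (Y0 z) = 0" "future (Y0 z)" "lip (Dz Y0 z) (Dz Y0 z) = 0" "lip (Dz Y0 z) (Dzb Y0 z) = 1/2"
proof -
  show "realv (Y0 z)" unfolding Y0_def realv_iff using realvs[OF z] lam_real[of z] realv_iff by simp
  show "\<exists>c::real. Y0 z = complex_of_real c *s (N1 z + N2 z)" unfolding Y0_def lam_def ell_def by blast
  show "lip (Y0 z) (Y0 z) = 0" unfolding Y0_def using ell_facts[OF z] by simp
  show "future (Y0 z)" unfolding Y0_def lam_def
    by (rule future_scale[OF ell_future[OF z]]) (use xi_nz[OF z] in simp)
  show "lip (Dz Y0 z) (Dz Y0 z) = 0" unfolding Y0_fun using lift_comp(1)[OF z dif(11)[OF z] lam_real] .
  show "lip (Dz Y0 z) (Dzb Y0 z) = 1/2" unfolding Y0_fun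
    using lift_comp(2)[OF z dif(11)[OF z] lam_real] lam_sq[OF z] by simp
qed

end


context surf
begin

lemma lip_ell_mm: "z \<in> U \<Longrightarrow> lip (ell z) (mm z) = 2"
  using basic basic_sym unfolding ell_def mm_def by simp

lemma part1: "canonical_lift U (\<lambda>z. N1 z + N2 z) Y \<longleftrightarrow> (\<forall>z\<in>U. Y z = Y0 z)"
proof
  assume YY: "\<forall>z\<in>U. Y z = Y0 z"
  have sY: "smooth_on U Y" using smooth_cong[OF U_open sm_Y0] YY by blast
  have "realv (Y z) \<and> (\<exists>c::real. Y z = complex_of_real c *s (N1 z + N2 z)) \<and>
        lip (Y z) (Y z) = 0 \<and> future (Y z) \<and>
        lip (Dz Y z) (Dz Y z) = 0 \<and> lip (Dz Y z) (Dzb Y z) = 1/2" if z: "z \<in> U" for z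
  proof -
    have e: "\<And>w. w \<in> U \<Longrightarrow> Y w = Y0 w" using YY by blast
    have "Y z = Y0 z" "Dz Y z = Dz Y0 z" "Dzb Y z = Dzb Y0 z"
      using e[OF z] Dz_cong[OF U_open z e] by auto
    then show ?thesis using Y0_lift[OF z] by simp
  qed
  then show "canonical_lift U (\<lambda>z. N1 z + N2 z) Y" unfolding canonical_lift_def using sY by blast
next
  assume cl: "canonical_lift U (\<lambda>z. N1 z + N2 z) Y"
  then have sY: "smooth_on U Y" and C: "\<And>z. z \<in> U \<Longrightarrow> realv (Y z) \<and> (\<exists>c::real. Y z = complex_of_real c *s (N1 z + N2 z)) \<and>
        lip (Y z) (Y z) = 0 \<and> future (Y z) \<and>
        lip (Dz Y z) (Dz Y z) = 0 \<and> lip (Dz Y z) (Dzb Y z) = 1/2"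
    unfolding canonical_lift_def by auto
  define cf where "cf w = lip (Y w) (mm w) * (1/2)" for w
  have Yeq: "Y w = cf w *s ell w \<and> cnj (cf w) = cf w \<and> (\<exists>c::real. cf w = complex_of_real c)" if w: "w \<in> U" for w
  proof -
    obtain c :: real where c: "Y w = complex_of_real c *s ell w" using C[OF w] unfolding ell_def by blast
    have "cf w = complex_of_real c" unfolding cf_def c using lip_ell_mm[OF w] by simp
    then show ?thesis using c by simp
  qed
  have scf: "smooth_on U cf" unfolding cf_def[abs_def]
    by (intro smooth_mult[OF U_open] smooth_lip[OF U_open] sY sm_ell smooth_const[OF U_open])
  show "\<forall>z\<in>U. Y z = Y0 z"
  proof
    fix z assume z: "z \<in> U"
    have e: "\<And>w. w \<in> U \<Longrightarrow> Y w = cf w *s ell w" using Yeq by blast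
    have dcf: "cf differentiable (at z)" using smooth_diff[OF U_open scf z] .
    have "lip (Dz Y z) (Dzb Y z) = cf z * cf z * (xi z * cnj (xi z)) / EE z"
      using Dz_cong[OF U_open z e] lift_comp(2)[OF z dcf] Yeq by simp
    then have h1: "cf z * cf z * (xi z * cnj (xi z)) / EE z = 1/2" using C[OF z] by simp
    have nz: "(xi z * cnj (xi z)) / EE z \<noteq> 0" using xi_nz[OF z] EE_nz[of z] by simp
    have "cf z * cf z = lam z * lam z"
    proof -
      have "cf z * cf z * ((xi z * cnj (xi z)) / EE z) = lam z * lam z * ((xi z * cnj (xi z)) / EE z)"
        by (simp only: times_divide_eq_right h1 lam_sq[OF z])
      then show ?thesis using nz mult_right_cancel by blast
    qed
    obtain r :: real where r: "cf z = complex_of_real r" using Yeq[OF z] by blast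
    obtain l :: real where l: "lam z = complex_of_real l" "l > 0"
    proof -
      have "Re (lam z) > 0" using lam_pos[OF z] .
      moreover have "lam z = complex_of_real (Re (lam z))" unfolding lam_def by simp
      ultimately show ?thesis using that by blast
    qed
    have rl: "r * r = l * l" using \<open>cf z * cf z = lam z * lam z\<close> r l
      by (metis of_real_eq_iff of_real_mult)
    have "future (complex_of_real r *s ell z)" using C[OF z] Yeq[OF z] r by simp
    then have "r * Re (lip (ell z) e4) < 0" unfolding future_def by simp
    moreover have "Re (lip (ell z) e4) < 0" using ell_future[OF z] unfolding future_def .
    ultimately have "r > 0" by (simp add: mult_less_0_iff)
    then have "r = l"
    proof -
      assume r0: "r > 0"
      show "r = l"
      proof (rule ccontr)
        assume "r \<noteq> l"
        then consider "r < l" | "l < r" by linarith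
        then show False
        proof cases
          case 1 then have "r * r < l * l" using r0 by (intro mult_strict_mono) auto
          then show False using rl by simp
        next
          case 2 then have "l * l < r * r" using l(2) by (intro mult_strict_mono) auto
          then show False using rl by simp
        qed
      qed
    qed
    then show "Y z = Y0 z" using Yeq[OF z] r l unfolding Y0_def by simp
  qed
qed

end


context surf
begin

lemma Y0_on: assumes w: "w \<in> U"
  shows "lip (Y0 w) (Y0 w) = 0" "lip (Dz Y0 w) (Dz Y0 w) = 0" "lip (Dz Y0 w) (Dzb Y0 w) = 1/2"
    "lip (Y0 w) (f w) = 0" "lip (Y0 w) (Dz f w) = 0" "lip (f w) (Y0 w) = 0" "realv (Y0 w)"
    "Dzb Y0 w = vcnj (Dz Y0 w)"
proof -
  show "lip (Y0 w) (Y0 w) = 0" "lip (Dz Y0 w) (Dz Y0 w) = 0" "lip (Dz Y0 w) (Dzb Y0 w) = 1/2" "realv (Y0 w)"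
    using Y0_lift[OF w] by auto
  show "lip (Y0 w) (f w) = 0" "lip (Y0 w) (Dz f w) = 0" "lip (f w) (Y0 w) = 0"
    unfolding Y0_def using ell_facts[OF w] by simp_all
  show "Dzb Y0 w = vcnj (Dz Y0 w)"
    using Dzb_real[OF U_open w _ dif(12)[OF w]] Y0_lift(1) by blast
qed

lemma f_Yz_on: assumes w: "w \<in> U" shows "lip (f w) (Dz Y0 w) = 0"
proof -
  have "lip (Dz f w) (Y0 w) + lip (f w) (Dz Y0 w) = 0"
    using lip_const(1)[OF U_open w dif(1)[OF w] dif(12)[OF w], of 0] Y0_on(6) by blast
  moreover have "lip (Dz f w) (Y0 w) = 0" using Y0_on(5)[OF w] lip_sym by metis
  ultimately show ?thesis by simp
qed

definition "WW z = Dzb (Dz Y0) z"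

lemma W_comm: "z \<in> U \<Longrightarrow> WW z = Dz (Dzb Y0) z"
  unfolding WW_def using Dz_Dzb_comm[OF U_open sm_Y0] by blast

lemma Yfacts: assumes z: "z \<in> U"
  shows "lip (Y0 z) (Y0 z) = 0" "lip (Y0 z) (Dz Y0 z) = 0" "lip (Y0 z) (Dzb Y0 z) = 0"
   "lip (Dz Y0 z) (Dz Y0 z) = 0" "lip (Dzb Y0 z) (Dzb Y0 z) = 0" "lip (Dz Y0 z) (Dzb Y0 z) = 1/2"
   "lip (Y0 z) (WW z) = -1/2" "lip (Dz Y0 z) (WW z) = 0" "lip (Dzb Y0 z) (WW z) = 0"
   "lip (f z) (Y0 z) = 0" "lip (f z) (Dz Y0 z) = 0" "lip (f z) (Dzb Y0 z) = 0" "lip (f z) (WW z) = 0"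
   "vcnj (WW z) = WW z" "lip (f z) (f z) = 1"
proof -
  note d = dif[OF z]
  have dY: "Dz Y0 differentiable (at z)" "Dzb Y0 differentiable (at z)" using d by auto
  show a1: "lip (Y0 z) (Y0 z) = 0" using Y0_on[OF z] by simp
  have "lip (Dz Y0 z) (Y0 z) + lip (Y0 z) (Dz Y0 z) = 0" "lip (Dzb Y0 z) (Y0 z) + lip (Y0 z) (Dzb Y0 z) = 0"
    using lip_const[OF U_open z d(12) d(12) Y0_on(1)] by auto
  then show a2: "lip (Y0 z) (Dz Y0 z) = 0" and a3: "lip (Y0 z) (Dzb Y0 z) = 0"
    using lip_sym[of "Y0 z" "Dz Y0 z"] lip_sym[of "Y0 z" "Dzb Y0 z"] by simp_all
  show a4: "lip (Dz Y0 z) (Dz Y0 z) = 0" using Y0_on[OF z] by simp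
  show a5: "lip (Dzb Y0 z) (Dzb Y0 z) = 0" using Y0_on(8)[OF z] lip_vcnj a4 by simp
  show a6: "lip (Dz Y0 z) (Dzb Y0 z) = 1/2" using Y0_on[OF z] by simp
  have a2U: "\<And>w. w \<in> U \<Longrightarrow> lip (Y0 w) (Dz Y0 w) = 0"
  proof -
    fix w assume w: "w \<in> U"
    have "lip (Dz Y0 w) (Y0 w) + lip (Y0 w) (Dz Y0 w) = 0"
      using lip_const(1)[OF U_open w dif(12)[OF w] dif(12)[OF w] Y0_on(1)] by auto
    then show "lip (Y0 w) (Dz Y0 w) = 0" using lip_sym[of "Y0 w" "Dz Y0 w"] by simp
  qed
  have "lip (Dzb Y0 z) (Dz Y0 z) + lip (Y0 z) (Dzb (Dz Y0) z) = 0"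
    using lip_const(2)[OF U_open z d(12) d(13) a2U] .
  then show "lip (Y0 z) (WW z) = -1/2" unfolding WW_def using a6 lip_sym[of "Dzb Y0 z" "Dz Y0 z"]
    by (simp add: add_eq_0_iff)
  have "lip (Dzb (Dz Y0) z) (Dz Y0 z) + lip (Dz Y0 z) (Dzb (Dz Y0) z) = 0"
    using lip_const(2)[OF U_open z d(13) d(13) Y0_on(2)] .
  then show "lip (Dz Y0 z) (WW z) = 0" unfolding WW_def using lip_sym[of "Dz Y0 z" "Dzb (Dz Y0) z"] by simp
  have bbU: "\<And>w. w \<in> U \<Longrightarrow> lip (Dzb Y0 w) (Dzb Y0 w) = 0"
    using Y0_on(8) Y0_on(2) lip_vcnj by simp
  have "lip (Dz (Dzb Y0) z) (Dzb Y0 z) + lip (Dzb Y0 z) (Dz (Dzb Y0) z) = 0"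
    using lip_const(1)[OF U_open z d(14) d(14) bbU] .
  then show "lip (Dzb Y0 z) (WW z) = 0" unfolding W_comm[OF z] using lip_sym[of "Dzb Y0 z" "Dz (Dzb Y0) z"] by simp
  show "lip (f z) (Y0 z) = 0" using Y0_on[OF z] by simp
  show "lip (f z) (Dz Y0 z) = 0" using f_Yz_on[OF z] .
  show "lip (f z) (Dzb Y0 z) = 0"
  proof -
    have "lip (Dzb f z) (Y0 z) + lip (f z) (Dzb Y0 z) = 0"
      using lip_const(2)[OF U_open z d(1) d(12) Y0_on(6)] .
    moreover have "lip (Dzb f z) (Y0 z) = 0" unfolding Y0_def using ell_facts[OF z] by simp
    ultimately show ?thesis by simp
  qed
  show "lip (f z) (WW z) = 0"
  proof -
    have "lip (Dzb f z) (Dz Y0 z) + lip (f z) (Dzb (Dz Y0) z) = 0"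
      using lip_const(2)[OF U_open z d(1) d(13) f_Yz_on] .
    moreover have "lip (Dzb f z) (Dz Y0 z) = 0"
    proof -
      have "Dz Y0 z = dzc lam z *s ell z + lam z *s ((- xi z / EE z) *s Dzb f z + cc z *s ell z)"
        unfolding Y0_fun using Dz_scal(1)[OF d(11) d(8)] L_exp[OF z] by simp
      then show ?thesis using basic[OF z] ell_facts[OF z] by simp
    qed
    ultimately show ?thesis unfolding WW_def by simp
  qed
  show "vcnj (WW z) = WW z"
  proof -
    have e: "\<And>w. w \<in> U \<Longrightarrow> vcnj (Dz Y0 w) = Dzb Y0 w" using Y0_on(8) by simp
    have "vcnj (WW z) = Dz (\<lambda>w. vcnj (Dz Y0 w)) z" unfolding WW_def using Dzb_vcnj(2)[OF d(13)] by simp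
    also have "\<dots> = Dz (Dzb Y0) z" using Dz_cong(1)[OF U_open z e] .
    also have "\<dots> = WW z" using W_comm[OF z] by simp
    finally show ?thesis .
  qed
  show "lip (f z) (f z) = 1" using basic[OF z] by simp
qed

end


context surf
begin

lemma Yfacts_sym: assumes z: "z \<in> U"
  shows "lip (Dz Y0 z) (Y0 z) = 0" "lip (Dzb Y0 z) (Y0 z) = 0" "lip (Dzb Y0 z) (Dz Y0 z) = 1/2"
   "lip (WW z) (Y0 z) = -1/2" "lip (WW z) (Dz Y0 z) = 0" "lip (WW z) (Dzb Y0 z) = 0"
   "lip (Y0 z) (f z) = 0" "lip (Dz Y0 z) (f z) = 0" "lip (Dzb Y0 z) (f z) = 0" "lip (WW z) (f z) = 0"
  using Yfacts[OF z] lip_sym by metis+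

lemma Vexp: assumes z: "z \<in> U"
  shows "\<exists>c0 c1 c2 c3 c4. v = c0 *s f z + c1 *s Y0 z + c2 *s Dz Y0 z + c3 *s Dzb Y0 z + c4 *s WW z"
proof (rule frame5)
  fix c0 c1 c2 c3 c4
  assume h: "c0 *s f z + c1 *s Y0 z + c2 *s Dz Y0 z + c3 *s Dzb Y0 z + c4 *s WW z = 0"
  note B = Yfacts[OF z] Yfacts_sym[OF z]
  have "lip (c0 *s f z + c1 *s Y0 z + c2 *s Dz Y0 z + c3 *s Dzb Y0 z + c4 *s WW z) (f z) = 0"
    "lip (c0 *s f z + c1 *s Y0 z + c2 *s Dz Y0 z + c3 *s Dzb Y0 z + c4 *s WW z) (Y0 z) = 0"
    "lip (c0 *s f z + c1 *s Y0 z + c2 *s Dz Y0 z + c3 *s Dzb Y0 z + c4 *s WW z) (Dz Y0 z) = 0"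
    "lip (c0 *s f z + c1 *s Y0 z + c2 *s Dz Y0 z + c3 *s Dzb Y0 z + c4 *s WW z) (Dzb Y0 z) = 0"
    "lip (c0 *s f z + c1 *s Y0 z + c2 *s Dz Y0 z + c3 *s Dzb Y0 z + c4 *s WW z) (WW z) = 0"
    unfolding h by simp_all
  then show "c0 = 0 \<and> c1 = 0 \<and> c2 = 0 \<and> c3 = 0 \<and> c4 = 0" using B by simp
qed

lemma perp_f: assumes z: "z \<in> U"
    and o: "lip w (Y0 z) = 0" "lip w (Dz Y0 z) = 0" "lip w (Dzb Y0 z) = 0" "lip w (WW z) = 0"
  shows "w = lip w (f z) *s f z"
proof -
  obtain c0 c1 c2 c3 c4 where c: "w = c0 *s f z + c1 *s Y0 z + c2 *s Dz Y0 z + c3 *s Dzb Y0 z + c4 *s WW z"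
    using Vexp[OF z] by blast
  note B = Yfacts[OF z] Yfacts_sym[OF z]
  have "lip w (Y0 z) = - c4 / 2" "lip w (Dz Y0 z) = c3 / 2" "lip w (Dzb Y0 z) = c2 / 2"
    "lip w (WW z) = - c1 / 2 + c4 * lip (WW z) (WW z)" "lip w (f z) = c0"
    unfolding c using B by simp_all
  then have "c4 = 0" "c3 = 0" "c2 = 0" "c1 = 0" "lip w (f z) = c0" using o by simp_all
  then show ?thesis using c by simp
qed

lemma part2: assumes z: "z \<in> U" shows "Vperp Y0 z = {complex_of_real t *s f z | t. True}"
proof
  show "{complex_of_real t *s f z | t. True} \<subseteq> Vperp Y0 z"
  proof
    fix w assume "w \<in> {complex_of_real t *s f z | t. True}"
    then obtain t where t: "w = complex_of_real t *s f z" by blast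
    have "realv w" unfolding t realv_iff using realvs[OF z] realv_iff by simp
    then show "w \<in> Vperp Y0 z" unfolding Vperp_def t WW_def[symmetric] using Yfacts[OF z] by simp
  qed
next
  show "Vperp Y0 z \<subseteq> {complex_of_real t *s f z | t. True}"
  proof
    fix w assume "w \<in> Vperp Y0 z"
    then have r: "realv w" and o: "lip w (Y0 z) = 0" "lip w (Dz Y0 z) = 0" "lip w (Dzb Y0 z) = 0" "lip w (WW z) = 0"
      unfolding Vperp_def WW_def by auto
    have e: "w = lip w (f z) *s f z" using perp_f[OF z o] .
    have "cnj (lip w (f z)) = lip w (f z)"
      using lip_vcnj[of w "f z"] r realvs(1)[OF z] realv_iff by simp
    then have "lip w (f z) = complex_of_real (Re (lip w (f z)))" by (simp add: complex_eq_iff)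
    then show "w \<in> {complex_of_real t *s f z | t. True}" using e by (metis (mono_tags, lifting) mem_Collect_eq)
  qed
qed

end


context surf
begin

definition "qq z = lip (WW z) (WW z)"

lemma conormal_eq: assumes z: "z \<in> U"
  shows "conormal Y0 z = (2 * qq z) *s Y0 z + 2 *s WW z"
proof -
  note B = Yfacts[OF z] Yfacts_sym[OF z]
  let ?N0 = "(2 * qq z) *s Y0 z + 2 *s WW z"
  have qr: "cnj (qq z) = qq z" unfolding qq_def using lip_vcnj[of "WW z" "WW z"] B by simp
  have Yr: "vcnj (Y0 z) = Y0 z" using Y0_on(7)[OF z] realv_iff by simp
  have P0: "realv ?N0 \<and> inV Y0 z ?N0 \<and> lip ?N0 ?N0 = 0 \<and> lip ?N0 (Dz Y0 z) = 0 \<and> lip (Y0 z) ?N0 = -1"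
  proof (intro conjI)
    show "realv ?N0" unfolding realv_iff using qr Yr B by simp
    show "inV Y0 z ?N0" unfolding inV_def WW_def
      by (rule exI[of _ "2 * qq z"], rule exI[of _ 0], rule exI[of _ 0], rule exI[of _ 2]) simp
    show "lip ?N0 ?N0 = 0" using B by (simp add: qq_def algebra_simps)
    show "lip ?N0 (Dz Y0 z) = 0" using B by simp
    show "lip (Y0 z) ?N0 = -1" using B by simp
  qed
  have U: "N = ?N0" if h: "realv N \<and> inV Y0 z N \<and> lip N N = 0 \<and> lip N (Dz Y0 z) = 0 \<and> lip (Y0 z) N = -1" for N
  proof -
    obtain a b c d where N: "N = a *s Y0 z + b *s Dz Y0 z + c *s Dzb Y0 z + d *s WW z"
      using h unfolding inV_def WW_def by blast
    have "lip N (Dz Y0 z) = c / 2" unfolding N using B by simp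
    then have c0: "c = 0" using h by simp
    have "lip N (Dzb Y0 z) = cnj (lip N (Dz Y0 z))"
      using lip_vcnj[of N "Dz Y0 z"] h Y0_on(8)[OF z] realv_iff by simp
    moreover have "lip N (Dzb Y0 z) = b / 2" unfolding N using B by simp
    ultimately have b0: "b = 0" using h by simp
    have "lip (Y0 z) N = - d / 2" unfolding N using B by simp
    then have d2: "d = 2" using h by simp
    have "lip N N = - 2 * a + 4 * qq z" unfolding N c0 b0 d2 using B by (simp add: qq_def algebra_simps)
    then have "a = 2 * qq z" using h by simp
    then show ?thesis unfolding N using b0 c0 d2 by simp
  qed
  show ?thesis unfolding conormal_def
    by (rule the_equality) (use P0 U in blast)+
qed

lemma Yzz_facts: assumes z: "z \<in> U"
  shows "lip (Dz (Dz Y0) z) (Y0 z) = 0" "lip (Dz (Dz Y0) z) (Dz Y0 z) = 0" "lip (Dz (Dz Y0) z) (Dzb Y0 z) = 0"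
    "lip (Dz (Dz Y0) z) (f z) = lam z * xi z"
proof -
  note d = dif[OF z]
  note B = Yfacts[OF z] Yfacts_sym[OF z]
  have yzy: "\<And>w. w \<in> U \<Longrightarrow> lip (Dz Y0 w) (Y0 w) = 0" using Yfacts_sym(1) by blast
  have "lip (Dz (Dz Y0) z) (Y0 z) + lip (Dz Y0 z) (Dz Y0 z) = 0"
    using lip_const(1)[OF U_open z d(13) d(12) yzy] .
  then show "lip (Dz (Dz Y0) z) (Y0 z) = 0" using B by simp
  have "lip (Dz (Dz Y0) z) (Dz Y0 z) + lip (Dz Y0 z) (Dz (Dz Y0) z) = 0"
    using lip_const(1)[OF U_open z d(13) d(13) Y0_on(2)] .
  then show "lip (Dz (Dz Y0) z) (Dz Y0 z) = 0" using lip_sym[of "Dz Y0 z" "Dz (Dz Y0) z"] by simp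
  have "lip (Dz (Dz Y0) z) (Dzb Y0 z) + lip (Dz Y0 z) (Dz (Dzb Y0) z) = 0"
    using lip_const(1)[OF U_open z d(13) d(14) Y0_on(3)] .
  then show "lip (Dz (Dz Y0) z) (Dzb Y0 z) = 0" using W_comm[OF z] B by simp
  have "lip (Dz (Dz Y0) z) (f z) + lip (Dz Y0 z) (Dz f z) = 0"
    using lip_const(1)[OF U_open z d(13) d(1) Yfacts_sym(8)] .
  moreover have "lip (Dz Y0 z) (Dz f z) = - lam z * xi z"
  proof -
    have "Dz Y0 z = dzc lam z *s ell z + lam z *s Dz ell z"
      unfolding Y0_fun using Dz_scal(1)[OF d(11) d(8)] by simp
    then show ?thesis using ell_facts[OF z] L_facts[OF z] by simp
  qed
  ultimately show "lip (Dz (Dz Y0) z) (f z) = lam z * xi z" by simp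
qed

lemma part3: assumes z: "z \<in> U"
  shows "hopf Y0 z = (lam z * xi z) *s f z"
proof -
  note B = Yfacts[OF z] Yfacts_sym[OF z]
  note Z = Yzz_facts[OF z]
  have s: "schwarzian Y0 z = 4 * lip (Dz (Dz Y0) z) (WW z)"
    unfolding schwarzian_def conormal_eq[OF z] using Z by simp
  let ?k = "hopf Y0 z"
  have o: "lip ?k (Y0 z) = 0" "lip ?k (Dz Y0 z) = 0" "lip ?k (Dzb Y0 z) = 0" "lip ?k (WW z) = 0"
    unfolding hopf_def s using Z B by simp_all
  have "?k = lip ?k (f z) *s f z" using perp_f[OF z o] .
  moreover have "lip ?k (f z) = lam z * xi z" unfolding hopf_def using Z B by simp
  ultimately show ?thesis by simp
qed

end


context surf
begin

lemma fzzb_ell: assumes w: "w \<in> U" shows "lip (Dzb (Dz f) w) (ell w) = 0"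
proof -
  obtain h :: "complex \<Rightarrow> real" where h: "\<forall>z\<in>U. meanH f u z = complex_of_real (h z) *s (N1 z + N2 z)"
    using orientation by blast
  have "meanH f u w = complex_of_real (h w) *s ell w" using h w unfolding ell_def by simp
  then show ?thesis unfolding meanH_eq[OF w] using ell_facts[OF w] by simp
qed

lemma codazzi: assumes z: "z \<in> U" shows "dzbc xi z = cnj (cc z) * xi z"
proof -
  note d = dif[OF z]
  have dfzz: "Dz (Dz f) differentiable (at z)" using d by simp
  have "dzbc xi z = lip (Dzb (Dz (Dz f)) z) (ell z) + lip (Dz (Dz f) z) (Dzb ell z)"
    unfolding xi_def[abs_def] using dzc_lip(2)[OF dfzz d(8)] .
  moreover have "Dzb (Dz (Dz f)) z = Dz (Dzb (Dz f)) z" using Dz_Dzb_comm[OF U_open sm_fz(1) z] .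
  moreover have "lip (Dz (Dzb (Dz f)) z) (ell z) = 0"
  proof -
    have "lip (Dz (Dzb (Dz f)) z) (ell z) + lip (Dzb (Dz f) z) (Dz ell z) = 0"
      using lip_const(1)[OF U_open z d(7) d(8) fzzb_ell] .
    moreover have "lip (Dzb (Dz f) z) (Dz ell z) = 0"
    proof -
      obtain h :: "complex \<Rightarrow> real" where h: "\<forall>z\<in>U. meanH f u z = complex_of_real (h z) *s (N1 z + N2 z)"
        using orientation by blast
      have "meanH f u z = complex_of_real (h z) *s ell z" using h z unfolding ell_def by simp
      moreover have "lip (ell z) (Dz ell z) = 0" "lip (f z) (Dz ell z) = 0"
        using L_facts[OF z] lip_sym by metis+
      ultimately show ?thesis unfolding meanH_eq[OF z] by simp
    qed
    ultimately show ?thesis by simp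
  qed
  moreover have "lip (Dz (Dz f) z) (Dzb ell z) = cnj (cc z) * xi z"
    unfolding Lb_exp[OF z] using fzz_P[OF z] unfolding xi_def by simp
  ultimately show ?thesis by simp
qed

lemma part4:
  fixes \<theta> :: "complex \<Rightarrow> real" and k :: "complex \<Rightarrow> complex"
  assumes z: "z \<in> U" and st: "smooth_on U \<theta>"
    and th: "\<forall>w\<in>U. xi w = complex_of_real (cmod (xi w)) * exp (\<i> * complex_of_real (\<theta> w))"
    and hk: "\<forall>w\<in>U. hopf Y0 w = k w *s f w"
  shows "k z = exp (complex_of_real (u z) + \<i> * complex_of_real (\<theta> z)) / complex_of_real (sqrt 2)"
    "exp (2 * u z) = 2 * (cmod (k z))\<^sup>2"
    "Dz f z = (complex_of_real (sqrt 2) * exp (complex_of_real (u z) + \<i> * complex_of_real (\<theta> z))) *s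
                   (dzbc (\<lambda>w. complex_of_real (u w) + \<i> * complex_of_real (\<theta> w)) z *s Y0 z - Dzb Y0 z)"
proof -
  define g where "g w = complex_of_real (u w) + \<i> * complex_of_real (\<theta> w)" for w
  note d = dif[OF z]
  have LX: "lam w * xi w = exp (g w) / complex_of_real (sqrt 2)" if w: "w \<in> U" for w
  proof -
    have x: "cmod (xi w) \<noteq> 0" using xi_nz[OF w] by simp
    have "lam w * xi w = complex_of_real (exp (u w) / (sqrt 2 * cmod (xi w))) * complex_of_real (cmod (xi w))
          * exp (\<i> * complex_of_real (\<theta> w))"
      unfolding lam_def using th w by (metis mult.assoc)
    also have "\<dots> = complex_of_real (exp (u w) / sqrt 2) * exp (\<i> * complex_of_real (\<theta> w))"
      using x by (simp add: field_simps)
    also have "\<dots> = exp (g w) / complex_of_real (sqrt 2)"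
      unfolding g_def by (simp add: exp_add field_simps flip: exp_of_real)
    finally show ?thesis .
  qed
  have kz: "k z = lam z * xi z"
  proof -
    have "(k z - lam z * xi z) *s f z = 0" using hk part3[OF z] z by (simp add: vec_eq_iff algebra_simps)
    then have "lip ((k z - lam z * xi z) *s f z) (f z) = 0" by (simp only: lip_zero_left)
    then show ?thesis using basic(1)[OF z] by (simp only: lip_smult_left mult_1_right) simp
  qed
  show k1: "k z = exp (complex_of_real (u z) + \<i> * complex_of_real (\<theta> z)) / complex_of_real (sqrt 2)"
    using kz LX[OF z] unfolding g_def by simp
  show "exp (2 * u z) = 2 * (cmod (k z))\<^sup>2"
  proof -
    have "cmod (k z) = exp (u z) / sqrt 2" unfolding k1 by (simp add: norm_divide)
    then show ?thesis by (simp add: power_divide power2_eq_square flip: exp_add)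
  qed
  have sg: "smooth_on U g" unfolding g_def[abs_def]
    by (intro smooth_add[OF U_open] smooth_mult[OF U_open] smooth_of_real[OF U_open] u_smooth st smooth_const[OF U_open])
  have dg: "g differentiable (at z)" using smooth_diff[OF U_open sg z] .
  have dexp: "(\<lambda>w. exp (g w)) differentiable (at z)"
    using smooth_diff[OF U_open smooth_exp[OF U_open sg] z] .
  have c0: "dzbc (\<lambda>_. 1 / complex_of_real (sqrt 2)) z = 0" using dzc_const(2)[of UNIV z] by simp
  have "dzbc (\<lambda>w. lam w * xi w) z = dzbc (\<lambda>w. exp (g w) * (1 / complex_of_real (sqrt 2))) z"
    using dzc_cong(2)[OF U_open z, of "\<lambda>w. lam w * xi w" "\<lambda>w. exp (g w) * (1 / complex_of_real (sqrt 2))"] LX by simp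
  also have "\<dots> = exp (g z) * dzbc g z * (1 / complex_of_real (sqrt 2))"
    using dzc_mult(2)[OF dexp, of "\<lambda>_. 1 / complex_of_real (sqrt 2)"] c0 dzc_exp[OF dg] by simp
  also have "\<dots> = lam z * xi z * dzbc g z" using LX[OF z] by simp
  finally have "dzbc lam z * xi z + lam z * dzbc xi z = lam z * xi z * dzbc g z"
    using dzc_mult(2)[OF d(11) d(10)] by simp
  then have "(dzbc lam z + lam z * cnj (cc z)) * xi z = (lam z * dzbc g z) * xi z"
    using codazzi[OF z] by (simp add: algebra_simps)
  then have key: "dzbc lam z + lam z * cnj (cc z) = lam z * dzbc g z" using xi_nz[OF z] by simp
  have DzbY: "Dzb Y0 z = dzbc lam z *s ell z + lam z *s ((- cnj (xi z) / EE z) *s Dz f z + cnj (cc z) *s ell z)"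
    unfolding Y0_fun using Dz_scal(2)[OF d(11) d(8)] Lb_exp[OF z] by simp
  have diff: "dzbc g z *s Y0 z - Dzb Y0 z = (lam z * cnj (xi z) / EE z) *s Dz f z"
  proof -
    have "dzbc g z *s Y0 z - Dzb Y0 z = (lam z * dzbc g z - (dzbc lam z + lam z * cnj (cc z))) *s ell z
        + (lam z * cnj (xi z) / EE z) *s Dz f z"
      unfolding DzbY Y0_def by (simp add: vec_eq_iff algebra_simps)
    then show ?thesis using key by simp
  qed
  have one: "(complex_of_real (sqrt 2) * exp (g z)) * (lam z * cnj (xi z) / EE z) = 1"
  proof -
    have "exp (g z) = complex_of_real (sqrt 2) * (lam z * xi z)" using LX[OF z] by (simp add: field_simps)
    then have "(complex_of_real (sqrt 2) * exp (g z)) * (lam z * cnj (xi z) / EE z)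
        = 2 * (lam z * lam z * (xi z * cnj (xi z)) / EE z)"
      by (simp add: field_simps flip: of_real_mult)
    then show ?thesis using lam_sq[OF z] by simp
  qed
  show "Dz f z = (complex_of_real (sqrt 2) * exp (complex_of_real (u z) + \<i> * complex_of_real (\<theta> z))) *s
                   (dzbc (\<lambda>w. complex_of_real (u w) + \<i> * complex_of_real (\<theta> w)) z *s Y0 z - Dzb Y0 z)"
  proof -
    have gg: "g = (\<lambda>w. complex_of_real (u w) + \<i> * complex_of_real (\<theta> w))" by (simp add: fun_eq_iff g_def)
    have "Dz f z = (complex_of_real (sqrt 2) * exp (g z)) *s (dzbc g z *s Y0 z - Dzb Y0 z)"
      unfolding diff vector_smult_assoc one by simp
    then show ?thesis unfolding gg .
  qed
qed

end


theorem mainTheorem5: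
  fixes U :: "complex set"
    and f N1 N2 :: "complex \<Rightarrow> complex^5"
    and u :: "complex \<Rightarrow> real"
  defines "Y0 \<equiv> \<lambda>z. complex_of_real (exp (u z) / (sqrt 2 * cmod (xi1 f N1 z - xi2 f N2 z))) *s (N1 z + N2 z)"
  assumes U_open: "open U"
    and f_smooth: "smooth_on U f" and u_smooth: "smooth_on U u"
    and N1_smooth: "smooth_on U N1" and N2_smooth: "smooth_on U N2"
    and f_sphere: "\<forall>z\<in>U. realv (f z) \<and> lip (f z) (f z) = 1"
    and f_conf: "\<forall>z\<in>U. lip (Dz f z) (Dz f z) = 0 \<and> lip (Dz f z) (Dzb f z) = exp (2 * complex_of_real (u z))"
    and N_real: "\<forall>z\<in>U. realv (N1 z) \<and> realv (N2 z)"
    and N_normal: "\<forall>z\<in>U. lip (N1 z) (f z) = 0 \<and> lip (N1 z) (Dz f z) = 0 \<and>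
                          lip (N2 z) (f z) = 0 \<and> lip (N2 z) (Dz f z) = 0"
    and N_orthonormal: "\<forall>z\<in>U. lip (N1 z) (N1 z) = 1 \<and> lip (N2 z) (N2 z) = -1 \<and> lip (N1 z) (N2 z) = 0"
    and N2_future: "\<forall>z\<in>U. future (N2 z)"
    and marginally_trapped: "\<forall>z\<in>U. lip (meanH f u z) (meanH f u z) = 0"
    and orientation: "\<exists>h :: complex \<Rightarrow> real. \<forall>z\<in>U. meanH f u z = complex_of_real (h z) *s (N1 z + N2 z)"
    and non_isotropic: "\<forall>z\<in>U. (xi1 f N1 z)\<^sup>2 - (xi2 f N2 z)\<^sup>2 \<noteq> 0"
  shows "(\<forall>Y. canonical_lift U (\<lambda>z. N1 z + N2 z) Y \<longleftrightarrow> (\<forall>z\<in>U. Y z = Y0 z))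
    \<and> (\<forall>z\<in>U. Vperp Y0 z = {complex_of_real t *s f z | t. True})
    \<and> (\<forall>z\<in>U. hopf Y0 z = ((xi1 f N1 z - xi2 f N2 z) * complex_of_real (exp (u z)) / complex_of_real (sqrt 2 * cmod (xi1 f N1 z - xi2 f N2 z))) *s f z)
    \<and> (\<forall>\<theta> :: complex \<Rightarrow> real. \<forall>k :: complex \<Rightarrow> complex.
          smooth_on U \<theta> \<and> (\<forall>z\<in>U. xi1 f N1 z - xi2 f N2 z = complex_of_real (cmod (xi1 f N1 z - xi2 f N2 z)) * exp (\<i> * complex_of_real (\<theta> z)))
          \<and> (\<forall>z\<in>U. hopf Y0 z = k z *s f z) \<longrightarrow>
          (\<forall>z\<in>U. k z = exp (complex_of_real (u z) + \<i> * complex_of_real (\<theta> z)) / complex_of_real (sqrt 2)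
               \<and> exp (2 * u z) = 2 * (cmod (k z))\<^sup>2
               \<and> Dz f z = (complex_of_real (sqrt 2) * exp (complex_of_real (u z) + \<i> * complex_of_real (\<theta> z))) *s
                   (dzbc (\<lambda>w. complex_of_real (u w) + \<i> * complex_of_real (\<theta> w)) z *s Y0 z - Dzb Y0 z)))"
proof -
  interpret S: surf U f N1 N2 u
    by (unfold_locales; fact)
  have Y0eq: "Y0 = S.Y0"
    unfolding Y0_def S.Y0_def[abs_def] S.lam_def S.ell_def S.xi_eq ..
  have xe: "\<And>w. xi1 f N1 w - xi2 f N2 w = S.xi w" by (rule S.xi_eq)
  have p1: "\<forall>Y. canonical_lift U (\<lambda>z. N1 z + N2 z) Y \<longleftrightarrow> (\<forall>z\<in>U. Y z = S.Y0 z)"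
    using S.part1 by blast
  have p2: "\<forall>z\<in>U. Vperp S.Y0 z = {complex_of_real t *s f z | t. True}"
    using S.part2 by blast
  have p3: "\<forall>z\<in>U. hopf S.Y0 z = (S.xi z * complex_of_real (exp (u z)) / complex_of_real (sqrt 2 * cmod (S.xi z))) *s f z"
  proof
    fix z assume z: "z \<in> U"
    have "S.lam z * S.xi z = S.xi z * complex_of_real (exp (u z)) / complex_of_real (sqrt 2 * cmod (S.xi z))"
      unfolding S.lam_def by simp
    then show "hopf S.Y0 z = (S.xi z * complex_of_real (exp (u z)) / complex_of_real (sqrt 2 * cmod (S.xi z))) *s f z"
      using S.part3[OF z] by simp
  qed
  have p4: "\<forall>\<theta> :: complex \<Rightarrow> real. \<forall>k :: complex \<Rightarrow> complex.
          smooth_on U \<theta> \<and> (\<forall>z\<in>U. S.xi z = complex_of_real (cmod (S.xi z)) * exp (\<i> * complex_of_real (\<theta> z)))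
          \<and> (\<forall>z\<in>U. hopf S.Y0 z = k z *s f z) \<longrightarrow>
          (\<forall>z\<in>U. k z = exp (complex_of_real (u z) + \<i> * complex_of_real (\<theta> z)) / complex_of_real (sqrt 2)
               \<and> exp (2 * u z) = 2 * (cmod (k z))\<^sup>2
               \<and> Dz f z = (complex_of_real (sqrt 2) * exp (complex_of_real (u z) + \<i> * complex_of_real (\<theta> z))) *s
                   (dzbc (\<lambda>w. complex_of_real (u w) + \<i> * complex_of_real (\<theta> w)) z *s S.Y0 z - Dzb S.Y0 z))"
  proof (intro allI impI ballI)
    fix \<theta> :: "complex \<Rightarrow> real" and k :: "complex \<Rightarrow> complex" and z
    assume h: "smooth_on U \<theta> \<and> (\<forall>z\<in>U. S.xi z = complex_of_real (cmod (S.xi z)) * exp (\<i> * complex_of_real (\<theta> z))) \<and>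
          (\<forall>z\<in>U. hopf S.Y0 z = k z *s f z)" and z: "z \<in> U"
    have h1: "smooth_on U \<theta>" and h2: "\<forall>z\<in>U. S.xi z = complex_of_real (cmod (S.xi z)) * exp (\<i> * complex_of_real (\<theta> z))"
      and h3: "\<forall>z\<in>U. hopf S.Y0 z = k z *s f z" using h by auto
    show "k z = exp (complex_of_real (u z) + \<i> * complex_of_real (\<theta> z)) / complex_of_real (sqrt 2) \<and>
          exp (2 * u z) = 2 * (cmod (k z))\<^sup>2 \<and>
          Dz f z = (complex_of_real (sqrt 2) * exp (complex_of_real (u z) + \<i> * complex_of_real (\<theta> z))) *s
            (dzbc (\<lambda>w. complex_of_real (u w) + \<i> * complex_of_real (\<theta> w)) z *s S.Y0 z - Dzb S.Y0 z)"
      using S.part4[OF z h1 h2 h3] by blast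
  qed
  show ?thesis
    unfolding Y0eq xe by (intro conjI p1 p2 p3 p4)
qed


end
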